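(* Let $1\le p<\infty$ and let $X$ be a maximal sequence space. The following are equivalent: (1) $X$ is $p$-convex. (2) There exist a norm $\|\cdot\|_p$ on the sequence space $X_p:=\{\tau\in\ell_\infty:\ |\tau|^{1/p}\in X\}$ and a constant $c>0$ such that for all $\sigma\in X$ \[\frac1c\|\sigma\|_X\le \big\|\,|\sigma|^p\big\|_p^{1/p}\le\|\sigma\|_X .\] (3) There exists a maximal sequence space $Y$ such that $X={\rm ID}\mathcal L(Y,\ell_p)$ as sets, with equivalent norms. Moreover, in this case one can choose $Y={\rm ID}\mathcal L(X,\ell_p)$, and then for every $\sigma\in X$ \[\frac{1}{M^p(X)}\|\sigma\|_X\le \|D_\sigma:Y\to\ell_p\|\le\|\sigma\|_X .\]
   Context: All sequences are scalar sequences indexed by $\mathbb N$; $(e_k)$ denotes the unit vectors, and for a sequence $\sigma$ and $n\in\mathbb N$, $P_n\sigma:=\sum_{k=1}^n\sigma_ke_k$. A maximal sequence space is a Banach space $(X,\|\cdot\|_X)$ of scalar sequences such that: (i) $\ell_1\subset X\subset\ell_\infty$ and $\|e_k\|_X=1$ for all $k$; (ii) if $\sigma\in X$ and $\alpha\in\ell_\infty$ then the pointwise product $\alpha\sigma\in X$ with $\|\alpha\sigma\|_X\le\|\alpha\|_\infty\|\sigma\|_X$; (iii) $\sigma\in X$ if and only if $\sup_n\|P_n\sigma\|_X<\infty$, and in this case $\|\sigma\|_X=\sup_n\|P_n\sigma\|_X$. For $1\le p<\infty$, a maximal sequence space $X$ is $p$-convex if there is $c>0$ such that for all $n$ and $x_1,\dots,x_n\in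 X$, $\|(\sum_{k=1}^n|x_k|^p)^{1/p}\|_X\le c(\sum_{k=1}^n\|x_k\|_X^p)^{1/p}$ (pointwise operations); the least such $c$ is denoted $M^p(X)$. For maximal sequence spaces $X,Y$, ${\rm ID}\mathcal L(X,Y)$ denotes the space of sequences $\sigma$ such that the diagonal operator $D_\sigma(\tau)=(\sigma_k\tau_k)_k$ maps $X$ boundedly into $Y$, normed by the operator norm $\|D_\sigma:X\to Y\|$. $|\sigma|^r$ denotes the sequence $(|\sigma_k|^r)_k$. *)

theory Defs
  imports Complex_Main
begin

type_synonym seq = "nat \<Rightarrow> real"

definition unitvec :: "nat \<Rightarrow> seq" where
  "unitvec k = (\<lambda>j. if j = k then 1 else 0)"

definition trunc :: "nat \<Rightarrow> seq \<Rightarrow> seq" where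
  "trunc n \<sigma> = (\<lambda>k. if k < n then \<sigma> k else 0)"

definition ell1 :: "seq set" where
  "ell1 = {\<sigma>. summable (\<lambda>k. \<bar>\<sigma> k\<bar>)}"

definition ellinf :: "seq set" where
  "ellinf = {\<sigma>. bdd_above (range (\<lambda>k. \<bar>\<sigma> k\<bar>))}"

definition supnorm :: "seq \<Rightarrow> real" where
  "supnorm \<alpha> = (SUP k. \<bar>\<alpha> k\<bar>)"

definition ellp :: "real \<Rightarrow> seq set" where
  "ellp p = {\<sigma>. summable (\<lambda>k. \<bar>\<sigma> k\<bar> powr p)}"

definition ellp_norm :: "real \<Rightarrow> seq \<Rightarrow> real" where
  "ellp_norm p \<sigma> = (\<Sum>k. \<bar>\<sigma> k\<bar> powr p) powr (1 / p)"

definition normed_seq_space :: "seq set \<Rightarrow> (seq \<Rightarrow> real) \<Rightarrow> bool" where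
  "normed_seq_space S N \<longleftrightarrow>
     (\<lambda>k. 0) \<in> S \<and> (\<forall>x\<in>S. \<forall>y\<in>S. (\<lambda>k. x k + y k) \<in> S) \<and> (\<forall>c::real. \<forall>x\<in>S. (\<lambda>k. c * x k) \<in> S) \<and>
     (\<forall>x\<in>S. 0 \<le> N x) \<and> (\<forall>x\<in>S. N x = 0 \<longleftrightarrow> x = (\<lambda>k. 0)) \<and>
     (\<forall>c::real. \<forall>x\<in>S. N (\<lambda>k. c * x k) = \<bar>c\<bar> * N x) \<and>
     (\<forall>x\<in>S. \<forall>y\<in>S. N (\<lambda>k. x k + y k) \<le> N x + N y)"

definition banach_seq_space :: "seq set \<Rightarrow> (seq \<Rightarrow> real) \<Rightarrow> bool" where
  "banach_seq_space S N \<longleftrightarrow> normed_seq_space S N \<and>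
     (\<forall>x :: nat \<Rightarrow> seq. (\<forall>n. x n \<in> S) \<longrightarrow>
        (\<forall>\<epsilon>>0. \<exists>M. \<forall>m\<ge>M. \<forall>n\<ge>M. N (\<lambda>k. x m k - x n k) < \<epsilon>) \<longrightarrow>
        (\<exists>y\<in>S. (\<lambda>n. N (\<lambda>k. x n k - y k)) \<longlonglongrightarrow> 0))"

definition maximal_seq_space :: "seq set \<Rightarrow> (seq \<Rightarrow> real) \<Rightarrow> bool" where
  "maximal_seq_space X N \<longleftrightarrow>
     banach_seq_space X N \<and>
     ell1 \<subseteq> X \<and> X \<subseteq> ellinf \<and> (\<forall>k. N (unitvec k) = 1) \<and>
     (\<forall>\<sigma>\<in>X. \<forall>\<alpha>\<in>ellinf. (\<lambda>k. \<alpha> k * \<sigma> k) \<in> X \<and> N (\<lambda>k. \<alpha> k * \<sigma> k) \<le> supnorm \<alpha> * N \<sigma>) \<and>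
     (\<forall>\<sigma>. \<sigma> \<in> X \<longleftrightarrow> bdd_above (range (\<lambda>n. N (trunc n \<sigma>)))) \<and>
     (\<forall>\<sigma>\<in>X. N \<sigma> = (SUP n. N (trunc n \<sigma>)))"

definition pconv_ineq :: "seq set \<Rightarrow> (seq \<Rightarrow> real) \<Rightarrow> real \<Rightarrow> real \<Rightarrow> bool" where
  "pconv_ineq X N p c \<longleftrightarrow>
     (\<forall>n. \<forall>x :: nat \<Rightarrow> seq. (\<forall>k<n. x k \<in> X) \<longrightarrow>
        (\<lambda>j. (\<Sum>k<n. \<bar>x k j\<bar> powr p) powr (1 / p)) \<in> X \<and>
        N (\<lambda>j. (\<Sum>k<n. \<bar>x k j\<bar> powr p) powr (1 / p)) \<le> c * (\<Sum>k<n. N (x k) powr p) powr (1 / p))"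

definition p_convex :: "seq set \<Rightarrow> (seq \<Rightarrow> real) \<Rightarrow> real \<Rightarrow> bool" where
  "p_convex X N p \<longleftrightarrow> (\<exists>c>0. pconv_ineq X N p c)"

definition pconv_const :: "seq set \<Rightarrow> (seq \<Rightarrow> real) \<Rightarrow> real \<Rightarrow> real" where
  "pconv_const X N p = Inf {c. c > 0 \<and> pconv_ineq X N p c}"

definition diag_ops :: "seq set \<Rightarrow> (seq \<Rightarrow> real) \<Rightarrow> seq set \<Rightarrow> (seq \<Rightarrow> real) \<Rightarrow> seq set" where
  "diag_ops X NX Y NY = {\<sigma>. (\<forall>\<tau>\<in>X. (\<lambda>k. \<sigma> k * \<tau> k) \<in> Y) \<and>
        (\<exists>C. \<forall>\<tau>\<in>X. NY (\<lambda>k. \<sigma> k * \<tau> k) \<le> C * NX \<tau>)}"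

definition diag_norm :: "seq set \<Rightarrow> (seq \<Rightarrow> real) \<Rightarrow> (seq \<Rightarrow> real) \<Rightarrow> seq \<Rightarrow> real" where
  "diag_norm X NX NY \<sigma> = Sup {NY (\<lambda>k. \<sigma> k * \<tau> k) | \<tau>. \<tau> \<in> X \<and> NX \<tau> \<le> 1}"

definition Xp :: "seq set \<Rightarrow> real \<Rightarrow> seq set" where
  "Xp X p = {\<tau> \<in> ellinf. (\<lambda>k. \<bar>\<tau> k\<bar> powr (1 / p)) \<in> X}"

end

theory Submission
  imports Defs "HOL-Analysis.Convex"
begin


definition ideal_prop :: "seq set \<Rightarrow> (seq \<Rightarrow> real) \<Rightarrow> bool" where
  "ideal_prop X N \<longleftrightarrow> (\<forall>\<sigma>\<in>X. \<forall>\<alpha>\<in>ellinf. (\<lambda>k. \<alpha> k * \<sigma> k) \<in> X \<and> N (\<lambda>k. \<alpha> k * \<sigma> k) \<le> supnorm \<alpha> * N \<sigma>)"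

definition fatou_prop :: "seq set \<Rightarrow> (seq \<Rightarrow> real) \<Rightarrow> bool" where
  "fatou_prop X N \<longleftrightarrow> (\<forall>\<sigma>. \<sigma> \<in> X \<longleftrightarrow> bdd_above (range (\<lambda>n. N (trunc n \<sigma>)))) \<and>
     (\<forall>\<sigma>\<in>X. N \<sigma> = (SUP n. N (trunc n \<sigma>)))"

lemma maximal_iff:
  "maximal_seq_space X N \<longleftrightarrow> banach_seq_space X N \<and> ell1 \<subseteq> X \<and> X \<subseteq> ellinf \<and> (\<forall>k. N (unitvec k) = 1)
     \<and> ideal_prop X N \<and> fatou_prop X N"
  unfolding maximal_seq_space_def ideal_prop_def fatou_prop_def by blast

lemma finsupp_ell1: "(\<And>k. k \<ge> n \<Longrightarrow> x k = 0) \<Longrightarrow> x \<in> ell1"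
  unfolding ell1_def apply (auto intro!: summable_finite[of "{..<n}"]) by (meson not_le)

lemma trunc_ell1: "trunc n x \<in> ell1"
  by (rule finsupp_ell1[of n]) (simp add: trunc_def)

lemma unitvec_ell1: "unitvec k \<in> ell1"
  by (rule finsupp_ell1[of "Suc k"]) (simp add: unitvec_def)

lemma supnorm_le: "(\<And>k. \<bar>\<alpha> k\<bar> \<le> C) \<Longrightarrow> supnorm \<alpha> \<le> C"
  unfolding supnorm_def by (rule cSUP_least) auto

lemma bdd_ellinf: "(\<And>k. \<bar>\<alpha> k\<bar> \<le> C) \<Longrightarrow> \<alpha> \<in> ellinf"
  unfolding ellinf_def by (intro CollectI bdd_aboveI[of _ C]) auto

locale pre_ms =
  fixes X :: "seq set" and N :: "seq \<Rightarrow> real"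
  assumes normed: "normed_seq_space X N"
    and ideal: "ideal_prop X N"
    and unit_mem: "\<And>k. unitvec k \<in> X"
    and unit_norm: "\<And>k. N (unitvec k) = 1"
begin

lemma zero_mem: "(\<lambda>k. 0) \<in> X" using normed unfolding normed_seq_space_def by blast
lemma add_mem: "x \<in> X \<Longrightarrow> y \<in> X \<Longrightarrow> (\<lambda>k. x k + y k) \<in> X"
  using normed unfolding normed_seq_space_def by blast
lemma scale_mem: "x \<in> X \<Longrightarrow> (\<lambda>k. c * x k) \<in> X"
  using normed unfolding normed_seq_space_def by blast
lemma nonneg: "x \<in> X \<Longrightarrow> 0 \<le> N x"
  using normed unfolding normed_seq_space_def by blast
lemma zero_iff: "x \<in> X \<Longrightarrow> N x = 0 \<longleftrightarrow> x = (\<lambda>k. 0)"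
  using normed unfolding normed_seq_space_def by blast
lemma homog: "x \<in> X \<Longrightarrow> N (\<lambda>k. c * x k) = \<bar>c\<bar> * N x"
  using normed unfolding normed_seq_space_def by blast
lemma triangle: "x \<in> X \<Longrightarrow> y \<in> X \<Longrightarrow> N (\<lambda>k. x k + y k) \<le> N x + N y"
  using normed unfolding normed_seq_space_def by blast
lemma norm_zero: "N (\<lambda>k. 0) = 0" using zero_iff zero_mem by blast

lemma diff_mem: "x \<in> X \<Longrightarrow> y \<in> X \<Longrightarrow> (\<lambda>k. x k - y k) \<in> X"
  using add_mem[of x "\<lambda>k. (-1) * y k"] scale_mem[of y "-1"] by simp

lemma mono: assumes "x \<in> X" "\<And>k. \<bar>y k\<bar> \<le> \<bar>x k\<bar>" shows "y \<in> X" "N y \<le> N x"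
proof -
  define \<alpha> where "\<alpha> = (\<lambda>k. if x k = 0 then 0 else y k / x k)"
  have a1: "\<bar>\<alpha> k\<bar> \<le> 1" for k
    using assms(2)[of k] by (auto simp: \<alpha>_def abs_divide divide_le_eq_1)
  have ye: "y = (\<lambda>k. \<alpha> k * x k)"
  proof
    fix k show "y k = \<alpha> k * x k" using assms(2)[of k] by (cases "x k = 0") (auto simp: \<alpha>_def)
  qed
  have ai: "\<alpha> \<in> ellinf" by (rule bdd_ellinf[OF a1])
  have sn: "supnorm \<alpha> \<le> 1" by (rule supnorm_le[OF a1])
  from ideal assms(1) ai have "(\<lambda>k. \<alpha> k * x k) \<in> X" "N (\<lambda>k. \<alpha> k * x k) \<le> supnorm \<alpha> * N x"
    unfolding ideal_prop_def by auto
  then show "y \<in> X" "N y \<le> N x"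
    using ye sn nonneg[OF assms(1)] mult_right_mono[OF sn nonneg[OF assms(1)]] by auto
qed

lemma abs_mem: "x \<in> X \<Longrightarrow> (\<lambda>k. \<bar>x k\<bar>) \<in> X" by (rule mono) auto
lemma abs_norm: "x \<in> X \<Longrightarrow> N (\<lambda>k. \<bar>x k\<bar>) = N x"
  using mono(2)[of x "\<lambda>k. \<bar>x k\<bar>"] mono(2)[OF abs_mem, of x x] by fastforce

lemma coord_le: assumes "x \<in> X" shows "\<bar>x k\<bar> \<le> N x"
proof -
  have "(\<lambda>j. x k * unitvec k j) \<in> X" "N (\<lambda>j. x k * unitvec k j) = \<bar>x k\<bar>"
    using scale_mem[OF unit_mem] homog[OF unit_mem] unit_norm by auto
  moreover have "N (\<lambda>j. x k * unitvec k j) \<le> N x"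
    by (rule mono[OF assms]) (auto simp: unitvec_def)
  ultimately show ?thesis by simp
qed

lemma trunc_mem_norm: "trunc n x \<in> X \<and> N (trunc n x) \<le> (\<Sum>k<n. \<bar>x k\<bar>)"
proof (induction n)
  case 0
  then show ?case using zero_mem norm_zero by (simp add: trunc_def)
next
  case (Suc n)
  have eq: "trunc (Suc n) x = (\<lambda>k. trunc n x k + x n * unitvec n k)"
    by (auto simp: trunc_def unitvec_def fun_eq_iff less_Suc_eq)
  have m: "(\<lambda>k. x n * unitvec n k) \<in> X" by (rule scale_mem[OF unit_mem])
  have "N (trunc (Suc n) x) \<le> N (trunc n x) + N (\<lambda>k. x n * unitvec n k)"
    unfolding eq using triangle Suc m by blast
  also have "\<dots> \<le> (\<Sum>k<n. \<bar>x k\<bar>) + \<bar>x n\<bar>" using Suc homog[OF unit_mem] unit_norm by simp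
  finally have "N (trunc (Suc n) x) \<le> (\<Sum>k<Suc n. \<bar>x k\<bar>)" by simp
  moreover have "trunc (Suc n) x \<in> X" unfolding eq by (rule add_mem[OF _ m]) (use Suc in blast)
  ultimately show ?case by blast
qed

lemma trunc_mono: "x \<in> X \<Longrightarrow> N (trunc n x) \<le> N x"
  by (rule mono) (auto simp: trunc_def)

lemma sum_mem: "(\<And>k. k < (n::nat) \<Longrightarrow> x k \<in> X) \<Longrightarrow>
   (\<lambda>j. \<Sum>k<n. x k j) \<in> X \<and> N (\<lambda>j. \<Sum>k<n. x k j) \<le> (\<Sum>k<n. N (x k))"
proof (induction n)
  case 0 then show ?case using zero_mem norm_zero by simp
next
  case (Suc n)
  then have IH: "(\<lambda>j. \<Sum>k<n. x k j) \<in> X" "N (\<lambda>j. \<Sum>k<n. x k j) \<le> (\<Sum>k<n. N (x k))" by auto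
  have xn: "x n \<in> X" using Suc by auto
  show ?case using add_mem[OF IH(1) xn] triangle[OF IH(1) xn] IH(2) by simp
qed

end

lemma powr_le_iff_base: fixes x y r :: real shows "0 < r \<Longrightarrow> 0 \<le> x \<Longrightarrow> 0 \<le> y \<Longrightarrow> x powr r \<le> y powr r \<longleftrightarrow> x \<le> y"
proof -
  assume r: "0 < r" and x: "0 \<le> x" and y: "0 \<le> y"
  show ?thesis
  proof
    assume h: "x powr r \<le> y powr r"
    show "x \<le> y"
    proof (rule ccontr)
      assume "\<not> x \<le> y"
      then have "y < x" by simp
      then have "y powr r < x powr r" using powr_less_mono2[OF r y] by blast
      then show False using h by simp
    qed
  next
    assume "x \<le> y" then show "x powr r \<le> y powr r" using r x by (simp add: powr_mono2)
  qed
qed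

lemma powr_inv_le_iff: fixes a p A :: real shows "0 < p \<Longrightarrow> 0 \<le> a \<Longrightarrow> 0 \<le> A \<Longrightarrow> a powr (1/p) \<le> A \<longleftrightarrow> a \<le> A powr p"
proof -
  assume p: "0 < p" and a: "0 \<le> a" and A: "0 \<le> A"
  have "a powr (1/p) \<le> A \<longleftrightarrow> (a powr (1/p)) powr p \<le> A powr p"
    using powr_le_iff_base[OF p, of "a powr (1/p)" A] A by simp
  also have "(a powr (1/p)) powr p = a" using p a by (simp add: powr_powr)
  finally show ?thesis .
qed

lemma powr_inv_ge_iff: fixes a p A :: real shows "0 < p \<Longrightarrow> 0 \<le> a \<Longrightarrow> 0 \<le> A \<Longrightarrow> A \<le> a powr (1/p) \<longleftrightarrow> A powr p \<le> a"
proof -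
  assume p: "0 < p" and a: "0 \<le> a" and A: "0 \<le> A"
  have "A \<le> a powr (1/p) \<longleftrightarrow> A powr p \<le> (a powr (1/p)) powr p"
    using powr_le_iff_base[OF p, of A "a powr (1/p)"] A by simp
  also have "(a powr (1/p)) powr p = a" using p a by (simp add: powr_powr)
  finally show ?thesis .
qed

lemma powr_inv_powr: fixes a p :: real shows "0 < p \<Longrightarrow> 0 \<le> a \<Longrightarrow> (a powr p) powr (1/p) = a"
  by (simp add: powr_powr)

lemma powr_powr_inv: fixes a p :: real shows "0 < p \<Longrightarrow> 0 \<le> a \<Longrightarrow> (a powr (1/p)) powr p = a"
  by (simp add: powr_powr)

lemma ellp_norm_nonneg: "0 \<le> ellp_norm p f"
  by (simp add: ellp_norm_def)

lemma ellp_sum_nonneg: "f \<in> ellp p \<Longrightarrow> 0 \<le> (\<Sum>k. \<bar>f k\<bar> powr p)"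
  unfolding ellp_def by (auto intro: suminf_nonneg)

lemma ellp_norm_pow: "f \<in> ellp p \<Longrightarrow> 0 < p \<Longrightarrow> ellp_norm p f powr p = (\<Sum>k. \<bar>f k\<bar> powr p)"
  unfolding ellp_norm_def by (rule powr_powr_inv) (auto intro: ellp_sum_nonneg)

lemma ellp_norm_le_iff: "f \<in> ellp p \<Longrightarrow> 0 < p \<Longrightarrow> 0 \<le> A \<Longrightarrow> ellp_norm p f \<le> A \<longleftrightarrow> (\<Sum>k. \<bar>f k\<bar> powr p) \<le> A powr p"
  unfolding ellp_norm_def by (rule powr_inv_le_iff) (auto intro: ellp_sum_nonneg)

lemma ellp_norm_ge_iff: "f \<in> ellp p \<Longrightarrow> 0 < p \<Longrightarrow> 0 \<le> A \<Longrightarrow> A \<le> ellp_norm p f \<longleftrightarrow> A powr p \<le> (\<Sum>k. \<bar>f k\<bar> powr p)"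
  unfolding ellp_norm_def by (rule powr_inv_ge_iff) (auto intro: ellp_sum_nonneg)

lemma ellp_zero: "0 < p \<Longrightarrow> (\<lambda>k. 0) \<in> ellp p \<and> ellp_norm p (\<lambda>k. 0) = 0"
  by (simp add: ellp_def ellp_norm_def)

lemma ellp_finsupp:
  assumes "\<And>k. k \<ge> n \<Longrightarrow> f k = 0" "0 < p"
  shows "f \<in> ellp p" "(\<Sum>k. \<bar>f k\<bar> powr p) = (\<Sum>k<n. \<bar>f k\<bar> powr p)"
proof -
  have z: "\<bar>f k\<bar> powr p = 0" if "k \<notin> {..<n}" for k using assms that by simp
  show "f \<in> ellp p" unfolding ellp_def using summable_finite[of "{..<n}", OF _ z] by auto
  show "(\<Sum>k. \<bar>f k\<bar> powr p) = (\<Sum>k<n. \<bar>f k\<bar> powr p)" using suminf_finite[of "{..<n}", OF _ z] by auto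
qed

lemma ellp_scale:
  assumes "f \<in> ellp p" "0 < p"
  shows "(\<lambda>k. c * f k) \<in> ellp p" "ellp_norm p (\<lambda>k. c * f k) = \<bar>c\<bar> * ellp_norm p f"
proof -
  have e: "\<bar>c * f k\<bar> powr p = \<bar>c\<bar> powr p * \<bar>f k\<bar> powr p" for k by (simp add: abs_mult powr_mult)
  have s: "summable (\<lambda>k. \<bar>f k\<bar> powr p)" using assms by (simp add: ellp_def)
  have "summable (\<lambda>k. \<bar>c * f k\<bar> powr p)" unfolding e by (rule summable_mult[OF s])
  then show "(\<lambda>k. c * f k) \<in> ellp p" unfolding ellp_def by simp
  have "(\<Sum>k. \<bar>c * f k\<bar> powr p) = \<bar>c\<bar> powr p * (\<Sum>k. \<bar>f k\<bar> powr p)"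
    unfolding e by (rule suminf_mult[OF s])
  then show "ellp_norm p (\<lambda>k. c * f k) = \<bar>c\<bar> * ellp_norm p f"
    unfolding ellp_norm_def using assms(2)
    by (simp add: powr_mult powr_powr ellp_sum_nonneg[OF assms(1)])
qed

lemma ellp_mono:
  assumes "f \<in> ellp p" "0 < p" "\<And>k. \<bar>g k\<bar> \<le> \<bar>f k\<bar>"
  shows "g \<in> ellp p" "(\<Sum>k. \<bar>g k\<bar> powr p) \<le> (\<Sum>k. \<bar>f k\<bar> powr p)" "ellp_norm p g \<le> ellp_norm p f"
proof -
  have s: "summable (\<lambda>k. \<bar>f k\<bar> powr p)" using assms by (simp add: ellp_def)
  have le: "\<bar>g k\<bar> powr p \<le> \<bar>f k\<bar> powr p" for k using assms(2,3) by (simp add: powr_mono2)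
  have sg: "summable (\<lambda>k. \<bar>g k\<bar> powr p)"
    by (rule summable_comparison_test'[OF s, of 0]) (use le in auto)
  then show "g \<in> ellp p" by (simp add: ellp_def)
  show S: "(\<Sum>k. \<bar>g k\<bar> powr p) \<le> (\<Sum>k. \<bar>f k\<bar> powr p)" by (rule suminf_le[OF le sg s])
  show "ellp_norm p g \<le> ellp_norm p f" unfolding ellp_norm_def
    using S assms(2) ellp_sum_nonneg[of g p] \<open>g \<in> ellp p\<close> by (simp add: powr_mono2)
qed

lemma ellp_bounded_partial:
  assumes "\<And>n. (\<Sum>k<n. \<bar>f k\<bar> powr p) \<le> B"
  shows "f \<in> ellp p" "(\<Sum>k. \<bar>f k\<bar> powr p) \<le> B"
proof -
  have s: "summable (\<lambda>k. \<bar>f k\<bar> powr p)"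
    by (rule summableI_nonneg_bounded[where x=B]) (use assms in auto)
  then show "f \<in> ellp p" by (simp add: ellp_def)
  show "(\<Sum>k. \<bar>f k\<bar> powr p) \<le> B" by (rule suminf_le_const[OF s assms])
qed

lemma ellp_partial_le: "f \<in> ellp p \<Longrightarrow> (\<Sum>k<n. \<bar>f k\<bar> powr p) \<le> (\<Sum>k. \<bar>f k\<bar> powr p)"
  unfolding ellp_def by (rule sum_le_suminf) auto

lemma ellp_sum_zero:
  assumes "f \<in> ellp p" "(\<Sum>k. \<bar>f k\<bar> powr p) = 0" "0 < p"
  shows "f = (\<lambda>k. 0)"
proof -
  have s: "summable (\<lambda>k. \<bar>f k\<bar> powr p)" using assms by (simp add: ellp_def)
  have "\<forall>k. \<bar>f k\<bar> powr p = 0" using suminf_eq_zero_iff[OF s] assms(2) by simp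
  then show ?thesis by auto
qed

lemma convex_powr_ineq:
  fixes a b l p :: real
  assumes "1 \<le> p" "0 \<le> a" "0 \<le> b" "0 \<le> l" "l \<le> 1"
  shows "(l * a + (1 - l) * b) powr p \<le> l * a powr p + (1 - l) * b powr p"
proof -
  have pw: "t powr p \<le> t" if "0 \<le> t" "t \<le> 1" for t :: real
  proof (cases "t = 0")
    case False
    then have "t powr p \<le> t powr 1" using that assms(1) by (intro powr_mono') auto
    then show ?thesis using that by simp
  qed simp
  consider "a = 0" | "b = 0" | "0 < a" "0 < b" using assms by linarith
  then show ?thesis
  proof cases
    case 1
    then have "((1 - l) * b) powr p = (1 - l) powr p * b powr p" using assms by (simp add: powr_mult)
    also have "\<dots> \<le> (1 - l) * b powr p" using pw[of "1 - l"] assms by (intro mult_right_mono) auto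
    finally show ?thesis using 1 assms by simp
  next
    case 2
    then have "(l * a) powr p = l powr p * a powr p" using assms by (simp add: powr_mult)
    also have "\<dots> \<le> l * a powr p" using pw[of l] assms by (intro mult_right_mono) auto
    finally show ?thesis using 2 assms by simp
  next
    case 3
    show ?thesis using convex_onD[OF powr_convex[OF assms(1)], of "1 - l" a b] 3 assms by (auto simp: algebra_simps)
  qed
qed

lemma minkowski:
  assumes "f \<in> ellp p" "g \<in> ellp p" "1 \<le> p"
  shows "(\<lambda>k. f k + g k) \<in> ellp p" "ellp_norm p (\<lambda>k. f k + g k) \<le> ellp_norm p f + ellp_norm p g"
proof -
  have p0: "0 < p" using assms by simp
  define A where "A = ellp_norm p f"
  define B where "B = ellp_norm p g"
  have A0: "0 \<le> A" "0 \<le> B" unfolding A_def B_def by (auto simp: ellp_norm_nonneg)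
  have sf: "summable (\<lambda>k. \<bar>f k\<bar> powr p)" and sg: "summable (\<lambda>k. \<bar>g k\<bar> powr p)"
    using assms by (auto simp: ellp_def)
  have Ap: "A powr p = (\<Sum>k. \<bar>f k\<bar> powr p)" "B powr p = (\<Sum>k. \<bar>g k\<bar> powr p)"
    unfolding A_def B_def using ellp_norm_pow[OF _ p0] assms by auto
  have "(\<lambda>k. f k + g k) \<in> ellp p \<and> ellp_norm p (\<lambda>k. f k + g k) \<le> A + B"
  proof (cases "A = 0 \<or> B = 0")
    case True
    then show ?thesis
    proof
      assume "A = 0"
      then have "f = (\<lambda>k. 0)" using ellp_sum_zero[OF assms(1) _ p0] Ap(1) p0 by simp
      then show ?thesis using assms(2) B_def A0 \<open>A = 0\<close> by simp
    next
      assume "B = 0"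
      then have "g = (\<lambda>k. 0)" using ellp_sum_zero[OF assms(2) _ p0] Ap(2) p0 by simp
      then show ?thesis using assms(1) A_def A0 \<open>B = 0\<close> by simp
    qed
  next
    case False
    then have Ap0: "0 < A" "0 < B" using A0 by auto
    define l where "l = A / (A + B)"
    have l: "0 \<le> l" "l \<le> 1" "1 - l = B / (A + B)" using Ap0 by (auto simp: l_def field_simps)
    have pt: "\<bar>f k + g k\<bar> powr p \<le> (A + B) powr p * (l * ((\<bar>f k\<bar> / A) powr p) + (1 - l) * ((\<bar>g k\<bar> / B) powr p))" for k
    proof -
      have e: "\<bar>f k\<bar> + \<bar>g k\<bar> = (A + B) * (l * (\<bar>f k\<bar> / A) + (1 - l) * (\<bar>g k\<bar> / B))"
      proof -
        have "(A + B) * (l * (\<bar>f k\<bar> / A)) = \<bar>f k\<bar>" using Ap0 by (simp add: l_def)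
        moreover have "(A + B) * ((1 - l) * (\<bar>g k\<bar> / B)) = \<bar>g k\<bar>" using Ap0 by (simp add: l(3))
        ultimately show ?thesis by (simp add: distrib_left)
      qed
      have "\<bar>f k + g k\<bar> powr p \<le> (\<bar>f k\<bar> + \<bar>g k\<bar>) powr p" using p0 by (intro powr_mono2) auto
      also have "\<dots> = (A + B) powr p * (l * (\<bar>f k\<bar> / A) + (1 - l) * (\<bar>g k\<bar> / B)) powr p"
        unfolding e using Ap0 l by (auto intro!: powr_mult)
      also have "\<dots> \<le> (A + B) powr p * (l * ((\<bar>f k\<bar> / A) powr p) + (1 - l) * ((\<bar>g k\<bar> / B) powr p))"
        using convex_powr_ineq[OF assms(3), of "\<bar>f k\<bar> / A" "\<bar>g k\<bar> / B" l] Ap0 l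
        by (intro mult_left_mono) auto
      finally show ?thesis .
    qed
    have dv: "(\<lambda>k. (\<bar>f k\<bar> / A) powr p) = (\<lambda>k. \<bar>f k\<bar> powr p / A powr p)"
         "(\<lambda>k. (\<bar>g k\<bar> / B) powr p) = (\<lambda>k. \<bar>g k\<bar> powr p / B powr p)"
      using Ap0 by (auto simp: powr_divide)
    have s1: "summable (\<lambda>k. (\<bar>f k\<bar> / A) powr p)" "summable (\<lambda>k. (\<bar>g k\<bar> / B) powr p)"
      unfolding dv using sf sg by (auto intro: summable_divide)
    have v1: "(\<Sum>k. (\<bar>f k\<bar> / A) powr p) = 1" "(\<Sum>k. (\<bar>g k\<bar> / B) powr p) = 1"
      unfolding dv using Ap0 suminf_divide[OF sf, of "A powr p"] suminf_divide[OF sg, of "B powr p"] Ap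
      by auto
    define h where "h = (\<lambda>k. (A + B) powr p * (l * ((\<bar>f k\<bar> / A) powr p) + (1 - l) * ((\<bar>g k\<bar> / B) powr p)))"
    have sh: "summable h" unfolding h_def
      by (intro summable_mult summable_add s1)
    have a1: "(\<Sum>k. l * (\<bar>f k\<bar> / A) powr p) = l" using suminf_mult[OF s1(1), of l] v1 by simp
    have a2: "(\<Sum>k. (1 - l) * (\<bar>g k\<bar> / B) powr p) = 1 - l" using suminf_mult[OF s1(2), of "1 - l"] v1 by simp
    have a3: "(\<Sum>k. l * (\<bar>f k\<bar> / A) powr p + (1 - l) * (\<bar>g k\<bar> / B) powr p) = 1"
      using suminf_add[OF summable_mult[OF s1(1), of l] summable_mult[OF s1(2), of "1 - l"]] a1 a2 by simp
    have vh: "suminf h = (A + B) powr p" unfolding h_def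
      using suminf_mult[OF summable_add[OF summable_mult[OF s1(1), of l] summable_mult[OF s1(2), of "1 - l"]], of "(A + B) powr p"] a3
      by simp
    have ssum: "summable (\<lambda>k. \<bar>f k + g k\<bar> powr p)"
      by (rule summable_comparison_test'[OF sh, of 0]) (use pt in \<open>auto simp: h_def\<close>)
    have "(\<Sum>k. \<bar>f k + g k\<bar> powr p) \<le> suminf h"
      by (rule suminf_le[OF _ ssum sh]) (use pt in \<open>auto simp: h_def\<close>)
    then have "ellp_norm p (\<lambda>k. f k + g k) \<le> A + B"
      using ellp_norm_le_iff[OF _ p0, of _ "A + B"] A0 vh ssum by (simp add: ellp_def)
    then show ?thesis using ssum by (simp add: ellp_def)
  qed
  then show "(\<lambda>k. f k + g k) \<in> ellp p" "ellp_norm p (\<lambda>k. f k + g k) \<le> ellp_norm p f + ellp_norm p g"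
    unfolding A_def B_def by auto
qed



context pre_ms
begin

lemma fatou_le:
  assumes F: "fatou_prop X N" and b: "\<And>n. N (trunc n z) \<le> C"
  shows "z \<in> X" "N z \<le> C"
proof -
  have bd: "bdd_above (range (\<lambda>n. N (trunc n z)))" using b by (intro bdd_aboveI2) auto
  then show z: "z \<in> X" using F unfolding fatou_prop_def by blast
  have "N z = (SUP n. N (trunc n z))" using F z unfolding fatou_prop_def by blast
  also have "\<dots> \<le> C" by (rule cSUP_least) (use b in auto)
  finally show "N z \<le> C" .
qed

lemma maximal_of_fatou:
  assumes F: "fatou_prop X N"
  shows "maximal_seq_space X N"
proof -
  have inf: "X \<subseteq> ellinf"
  proof
    fix x assume "x \<in> X" then show "x \<in> ellinf" using coord_le by (intro bdd_ellinf) auto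
  qed
  have l1: "ell1 \<subseteq> X"
  proof
    fix x assume x: "x \<in> ell1"
    have s: "summable (\<lambda>k. \<bar>x k\<bar>)" using x by (simp add: ell1_def)
    have "N (trunc n x) \<le> (\<Sum>k. \<bar>x k\<bar>)" for n
      using trunc_mem_norm[of n x] sum_le_suminf[OF s, of "{..<n}"] by auto
    then show "x \<in> X" using fatou_le[OF F] by blast
  qed
  have ban: "banach_seq_space X N"
    unfolding banach_seq_space_def
  proof (intro conjI normed allI impI)
    fix x :: "nat \<Rightarrow> seq"
    assume xX: "\<forall>n. x n \<in> X"
      and cau: "\<forall>\<epsilon>>0. \<exists>M. \<forall>m\<ge>M. \<forall>n\<ge>M. N (\<lambda>k. x m k - x n k) < \<epsilon>"
    have dX: "(\<lambda>k. x m k - x n k) \<in> X" for m n using diff_mem xX by blast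
    have pc: "Cauchy (\<lambda>m. x m k)" for k
    proof (rule CauchyI)
      fix e :: real assume "0 < e"
      then obtain M where M: "\<forall>m\<ge>M. \<forall>n\<ge>M. N (\<lambda>k. x m k - x n k) < e" using cau by blast
      show "\<exists>M. \<forall>m\<ge>M. \<forall>n\<ge>M. norm (x m k - x n k) < e"
      proof (intro exI allI impI)
        fix m n assume "M \<le> m" "M \<le> n"
        then show "norm (x m k - x n k) < e" using M coord_le[OF dX[of m n], of k] by force
      qed
    qed
    define y where "y = (\<lambda>k. lim (\<lambda>m. x m k))"
    have ylim: "(\<lambda>m. x m k) \<longlonglongrightarrow> y k" for k
      unfolding y_def using pc[of k] by (simp add: Cauchy_convergent_iff convergent_LIMSEQ_iff)
    have K: "\<exists>M. \<forall>m\<ge>M. (\<lambda>k. x m k - y k) \<in> X \<and> N (\<lambda>k. x m k - y k) \<le> e" if e: "0 < e" for e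
    proof -
      obtain M where M: "\<forall>m\<ge>M. \<forall>n\<ge>M. N (\<lambda>k. x m k - x n k) < e" using cau e by blast
      show ?thesis
      proof (intro exI allI impI)
        fix m assume m: "M \<le> m"
        have tb: "N (trunc J (\<lambda>k. x m k - y k)) \<le> e" for J
        proof -
          define g where "g = (\<lambda>n. (\<Sum>k<J. \<bar>x n k - y k\<bar>))"
          have g0: "g \<longlonglongrightarrow> 0" unfolding g_def
            using tendsto_sum[of "{..<J}" "\<lambda>k n. \<bar>x n k - y k\<bar>" "\<lambda>k. 0" sequentially]
              tendsto_rabs[OF LIM_zero[OF ylim]] by simp
          have le: "N (trunc J (\<lambda>k. x m k - y k)) \<le> e + g n" if n: "n \<ge> M" for n
          proof -
            have eq: "trunc J (\<lambda>k. x m k - y k) = (\<lambda>k. trunc J (\<lambda>k. x m k - x n k) k + trunc J (\<lambda>k. x n k - y k) k)"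
              by (auto simp: trunc_def fun_eq_iff)
            have "N (trunc J (\<lambda>k. x m k - y k)) \<le> N (trunc J (\<lambda>k. x m k - x n k)) + N (trunc J (\<lambda>k. x n k - y k))"
              unfolding eq using triangle trunc_mem_norm by blast
            also have "\<dots> \<le> e + g n"
              using trunc_mono[OF dX[of m n], of J] M m n trunc_mem_norm[of J "\<lambda>k. x n k - y k"]
              by (force simp: g_def)
            finally show ?thesis .
          qed
          have "(\<lambda>n. e + g n) \<longlonglongrightarrow> e + 0" by (intro tendsto_add tendsto_const g0)
          then show ?thesis
            using le by (intro tendsto_le[OF trivial_limit_sequentially, of "\<lambda>n. e + g n" e "\<lambda>n. N (trunc J (\<lambda>k. x m k - y k))"])
               (auto simp: eventually_sequentially)
        qed
        show "(\<lambda>k. x m k - y k) \<in> X \<and> N (\<lambda>k. x m k - y k) \<le> e"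
          using fatou_le[OF F tb] by blast
      qed
    qed
    obtain M1 where M1: "\<forall>m\<ge>M1. (\<lambda>k. x m k - y k) \<in> X \<and> N (\<lambda>k. x m k - y k) \<le> 1"
      using K[of 1] by auto
    have "(\<lambda>k. x M1 k - (x M1 k - y k)) \<in> X" using diff_mem xX M1 by blast
    then have yX: "y \<in> X" by simp
    have "(\<lambda>n. N (\<lambda>k. x n k - y k)) \<longlonglongrightarrow> 0"
    proof (rule LIMSEQ_I)
      fix r :: real assume r: "0 < r"
      obtain M where M: "\<forall>m\<ge>M. (\<lambda>k. x m k - y k) \<in> X \<and> N (\<lambda>k. x m k - y k) \<le> r / 2"
        using K[of "r/2"] r by auto
      show "\<exists>no. \<forall>n\<ge>no. norm (N (\<lambda>k. x n k - y k) - 0) < r"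
      proof (intro exI allI impI)
        fix n assume "M \<le> n"
        then show "norm (N (\<lambda>k. x n k - y k) - 0) < r" using M nonneg r by fastforce
      qed
    qed
    then show "\<exists>y\<in>X. (\<lambda>n. N (\<lambda>k. x n k - y k)) \<longlonglongrightarrow> 0" using yX by blast
  qed
  show ?thesis unfolding maximal_iff using ban l1 inf unit_norm ideal F by blast
qed

end



lemma abs_le_supnorm: "\<alpha> \<in> ellinf \<Longrightarrow> \<bar>\<alpha> k\<bar> \<le> supnorm \<alpha>"
  unfolding supnorm_def ellinf_def by (rule cSUP_upper) auto

lemma ellp_unit:
  assumes "0 < p"
  shows "(\<lambda>j. \<sigma> j * unitvec k j) \<in> ellp p" "ellp_norm p (\<lambda>j. \<sigma> j * unitvec k j) = \<bar>\<sigma> k\<bar>"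
proof -
  have z: "\<And>j. j \<ge> Suc k \<Longrightarrow> \<sigma> j * unitvec k j = 0" by (simp add: unitvec_def)
  show "(\<lambda>j. \<sigma> j * unitvec k j) \<in> ellp p" using ellp_finsupp(1)[OF z assms] .
  have "(\<Sum>j. \<bar>\<sigma> j * unitvec k j\<bar> powr p) = (\<Sum>j<Suc k. \<bar>\<sigma> j * unitvec k j\<bar> powr p)"
    using ellp_finsupp(2)[OF z assms] .
  also have "\<dots> = \<bar>\<sigma> k\<bar> powr p" using assms by (simp add: unitvec_def)
  finally show "ellp_norm p (\<lambda>j. \<sigma> j * unitvec k j) = \<bar>\<sigma> k\<bar>"
    unfolding ellp_norm_def using assms by (simp add: powr_powr)
qed

locale pre_ms_p = pre_ms +
  fixes p :: real
  assumes p1: "1 \<le> p"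
begin

abbreviation "DY \<equiv> diag_ops X N (ellp p) (ellp_norm p)"
abbreviation "ND \<equiv> diag_norm X N (ellp_norm p)"

lemma p0: "0 < p" using p1 by simp

definition dset :: "seq \<Rightarrow> real set" where
  "dset \<sigma> = {ellp_norm p (\<lambda>k. \<sigma> k * \<tau> k) | \<tau>. \<tau> \<in> X \<and> N \<tau> \<le> 1}"

lemma ND_eq: "ND \<sigma> = Sup (dset \<sigma>)" unfolding diag_norm_def dset_def ..

lemma dset_ne: "dset \<sigma> \<noteq> {}"
  unfolding dset_def using zero_mem norm_zero by auto

lemma DY_D: "\<sigma> \<in> DY \<Longrightarrow> \<tau> \<in> X \<Longrightarrow> (\<lambda>k. \<sigma> k * \<tau> k) \<in> ellp p"
  unfolding diag_ops_def by blast

lemma dset_bdd: assumes "\<sigma> \<in> DY" shows "bdd_above (dset \<sigma>)"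
proof -
  obtain C where C: "\<forall>\<tau>\<in>X. ellp_norm p (\<lambda>k. \<sigma> k * \<tau> k) \<le> C * N \<tau>"
    using assms unfolding diag_ops_def by blast
  have "C * N \<tau> \<le> \<bar>C\<bar>" if "\<tau> \<in> X" "N \<tau> \<le> 1" for \<tau>
  proof -
    have "C * N \<tau> \<le> \<bar>C\<bar> * N \<tau>" using nonneg[OF that(1)] by (intro mult_right_mono) auto
    also have "\<dots> \<le> \<bar>C\<bar>" using that nonneg[OF that(1)] by (simp add: mult_left_le)
    finally show ?thesis .
  qed
  then show ?thesis unfolding dset_def using C by (intro bdd_aboveI[of _ "\<bar>C\<bar>"]) force
qed

lemma ND_upper: assumes "\<sigma> \<in> DY" "\<tau> \<in> X" "N \<tau> \<le> 1" shows "ellp_norm p (\<lambda>k. \<sigma> k * \<tau> k) \<le> ND \<sigma>"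
  unfolding ND_eq by (rule cSup_upper[OF _ dset_bdd[OF assms(1)]]) (use assms in \<open>auto simp: dset_def\<close>)

lemma ND_least: "(\<And>\<tau>. \<tau> \<in> X \<Longrightarrow> N \<tau> \<le> 1 \<Longrightarrow> ellp_norm p (\<lambda>k. \<sigma> k * \<tau> k) \<le> C) \<Longrightarrow> ND \<sigma> \<le> C"
  unfolding ND_eq by (rule cSup_least[OF dset_ne]) (auto simp: dset_def)

lemma ND_nonneg: assumes "\<sigma> \<in> DY" shows "0 \<le> ND \<sigma>"
proof -
  have "0 \<le> ellp_norm p (\<lambda>k. \<sigma> k * 0)" by (rule ellp_norm_nonneg)
  also have "\<dots> \<le> ND \<sigma>" using ND_upper[OF assms zero_mem] norm_zero by simp
  finally show ?thesis .
qed

lemma ND_bound: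
  assumes s: "\<sigma> \<in> DY" and t: "\<tau> \<in> X"
  shows "ellp_norm p (\<lambda>k. \<sigma> k * \<tau> k) \<le> ND \<sigma> * N \<tau>"
proof (cases "N \<tau> = 0")
  case True
  then have "\<tau> = (\<lambda>k. 0)" using zero_iff t by blast
  then show ?thesis using ellp_zero[OF p0] True by simp
next
  case False
  then have tp: "0 < N \<tau>" using nonneg[OF t] by simp
  define t' where "t' = (\<lambda>k. (1 / N \<tau>) * \<tau> k)"
  have t'X: "t' \<in> X" unfolding t'_def by (rule scale_mem[OF t])
  have "N t' = \<bar>1 / N \<tau>\<bar> * N \<tau>" unfolding t'_def by (rule homog[OF t])
  then have "N t' = 1" using tp by simp
  then have "ellp_norm p (\<lambda>k. \<sigma> k * t' k) \<le> ND \<sigma>" using ND_upper[OF s t'X] by simp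
  moreover have "(\<lambda>k. \<sigma> k * t' k) = (\<lambda>k. (1 / N \<tau>) * (\<sigma> k * \<tau> k))" unfolding t'_def by auto
  moreover have "ellp_norm p (\<lambda>k. (1 / N \<tau>) * (\<sigma> k * \<tau> k)) = (1 / N \<tau>) * ellp_norm p (\<lambda>k. \<sigma> k * \<tau> k)"
    using ellp_scale(2)[OF DY_D[OF s t] p0, of "1 / N \<tau>"] tp by simp
  ultimately have "(1 / N \<tau>) * ellp_norm p (\<lambda>k. \<sigma> k * \<tau> k) \<le> ND \<sigma>" by simp
  then show ?thesis using tp by (simp add: field_simps)
qed

lemma DY_intro:
  assumes "\<And>\<tau>. \<tau> \<in> X \<Longrightarrow> (\<lambda>k. \<sigma> k * \<tau> k) \<in> ellp p \<and> ellp_norm p (\<lambda>k. \<sigma> k * \<tau> k) \<le> C * N \<tau>"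
    and "0 \<le> C"
  shows "\<sigma> \<in> DY" "ND \<sigma> \<le> C"
proof -
  show "\<sigma> \<in> DY" unfolding diag_ops_def using assms(1) by blast
  show "ND \<sigma> \<le> C"
  proof (rule ND_least)
    fix \<tau> assume "\<tau> \<in> X" "N \<tau> \<le> 1"
    then have "C * N \<tau> \<le> C" using assms(2) by (simp add: mult_left_le)
    then show "ellp_norm p (\<lambda>k. \<sigma> k * \<tau> k) \<le> C" using assms(1)[OF \<open>\<tau> \<in> X\<close>] by linarith
  qed
qed

lemma DY_pre_ms: "pre_ms DY ND"
proof
  show "normed_seq_space DY ND"
    unfolding normed_seq_space_def
  proof (intro conjI ballI allI)
    show "(\<lambda>k. 0) \<in> DY"
      by (rule DY_intro[of _ 0]) (use ellp_zero[OF p0] in auto)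
    fix x y assume x: "x \<in> DY" and y: "y \<in> DY"
    have "(\<lambda>k. (x k + y k) * \<tau> k) \<in> ellp p \<and> ellp_norm p (\<lambda>k. (x k + y k) * \<tau> k) \<le> (ND x + ND y) * N \<tau>"
      if t: "\<tau> \<in> X" for \<tau>
    proof -
      have e: "(\<lambda>k. (x k + y k) * \<tau> k) = (\<lambda>k. x k * \<tau> k + y k * \<tau> k)" by (auto simp: algebra_simps)
      show ?thesis unfolding e using minkowski[OF DY_D[OF x t] DY_D[OF y t] p1] ND_bound[OF x t] ND_bound[OF y t]
        by (auto simp: algebra_simps)
    qed
    then show "(\<lambda>k. x k + y k) \<in> DY" "ND (\<lambda>k. x k + y k) \<le> ND x + ND y"
      using DY_intro[of "\<lambda>k. x k + y k" "ND x + ND y"] ND_nonneg[OF x] ND_nonneg[OF y] by auto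
  next
    fix c :: real and x assume x: "x \<in> DY"
    have h: "(\<lambda>k. (c * x k) * \<tau> k) \<in> ellp p \<and> ellp_norm p (\<lambda>k. (c * x k) * \<tau> k) \<le> (\<bar>c\<bar> * ND x) * N \<tau>"
      if t: "\<tau> \<in> X" for \<tau>
    proof -
      have e: "(\<lambda>k. (c * x k) * \<tau> k) = (\<lambda>k. c * (x k * \<tau> k))" by (auto simp: algebra_simps)
      show ?thesis unfolding e using ellp_scale[OF DY_D[OF x t] p0, of c] ND_bound[OF x t]
        by (auto simp: mult.assoc intro: mult_left_mono)
    qed
    then show cx: "(\<lambda>k. c * x k) \<in> DY" using DY_intro ND_nonneg[OF x] by (meson abs_ge_zero mult_nonneg_nonneg)
    have le1: "ND (\<lambda>k. c * x k) \<le> \<bar>c\<bar> * ND x"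
      using DY_intro(2)[of "\<lambda>k. c * x k" "\<bar>c\<bar> * ND x"] h ND_nonneg[OF x] by auto
    show "ND (\<lambda>k. c * x k) = \<bar>c\<bar> * ND x"
    proof (cases "c = 0")
      case True
      have "ND (\<lambda>k. 0) \<le> 0" by (rule DY_intro(2)[of _ 0]) (use ellp_zero[OF p0] in auto)
      then show ?thesis using True ND_nonneg[of "\<lambda>k. 0"] cx by force
    next
      case False
      have h2: "(\<lambda>k. (1/c) * (c * x k) * \<tau> k) \<in> ellp p \<and> ellp_norm p (\<lambda>k. (1/c) * (c * x k) * \<tau> k) \<le> (\<bar>1/c\<bar> * ND (\<lambda>k. c * x k)) * N \<tau>"
        if t: "\<tau> \<in> X" for \<tau>
      proof -
        have e: "(\<lambda>k. (1/c) * (c * x k) * \<tau> k) = (\<lambda>k. (1/c) * ((c * x k) * \<tau> k))" by (auto simp: algebra_simps)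
        have a: "ellp_norm p (\<lambda>k. (1/c) * ((c * x k) * \<tau> k)) = \<bar>1/c\<bar> * ellp_norm p (\<lambda>k. (c * x k) * \<tau> k)"
          by (rule ellp_scale(2)[OF DY_D[OF cx t] p0])
        have b: "(\<lambda>k. (1/c) * ((c * x k) * \<tau> k)) \<in> ellp p" by (rule ellp_scale(1)[OF DY_D[OF cx t] p0])
        have d: "\<bar>1/c\<bar> * ellp_norm p (\<lambda>k. (c * x k) * \<tau> k) \<le> \<bar>1/c\<bar> * (ND (\<lambda>k. c * x k) * N \<tau>)"
          by (rule mult_left_mono[OF ND_bound[OF cx t]]) simp
        show ?thesis unfolding e a using b d by (simp only: mult.assoc)
      qed
      have "ND (\<lambda>k. (1/c) * (c * x k)) \<le> \<bar>1/c\<bar> * ND (\<lambda>k. c * x k)"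
        using DY_intro(2)[OF h2] ND_nonneg[OF cx] by simp
      then have "ND x \<le> \<bar>1/c\<bar> * ND (\<lambda>k. c * x k)" using False by simp
      then have "\<bar>c\<bar> * ND x \<le> ND (\<lambda>k. c * x k)" using False by (simp add: field_simps)
      then show ?thesis using le1 by simp
    qed
  next
    fix x assume x: "x \<in> DY"
    show "0 \<le> ND x" by (rule ND_nonneg[OF x])
    show "ND x = 0 \<longleftrightarrow> x = (\<lambda>k. 0)"
    proof
      assume h: "ND x = 0"
      have "\<bar>x k\<bar> \<le> 0" for k
        using ND_bound[OF x unit_mem[of k]] ellp_unit[OF p0, of x k] unit_norm h by simp
      then show "x = (\<lambda>k. 0)" by auto
    next
      assume "x = (\<lambda>k. 0)"
      moreover have "ND (\<lambda>k. 0) \<le> 0" by (rule DY_intro(2)[of _ 0]) (use ellp_zero[OF p0] in auto)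
      ultimately show "ND x = 0" using ND_nonneg[OF x] by simp
    qed
  qed
next
  show "ideal_prop DY ND" unfolding ideal_prop_def
  proof (intro ballI conjI)
    fix \<sigma> \<alpha> assume s: "\<sigma> \<in> DY" and a: "\<alpha> \<in> ellinf"
    have sa: "0 \<le> supnorm \<alpha>" using abs_le_supnorm[OF a, of 0] by simp
    have h: "(\<lambda>k. (\<alpha> k * \<sigma> k) * \<tau> k) \<in> ellp p \<and> ellp_norm p (\<lambda>k. (\<alpha> k * \<sigma> k) * \<tau> k) \<le> (supnorm \<alpha> * ND \<sigma>) * N \<tau>"
      if t: "\<tau> \<in> X" for \<tau>
    proof -
      have le: "\<bar>(\<alpha> k * \<sigma> k) * \<tau> k\<bar> \<le> \<bar>supnorm \<alpha> * (\<sigma> k * \<tau> k)\<bar>" for k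
        using mult_right_mono[OF abs_le_supnorm[OF a, of k], of "\<bar>\<sigma> k\<bar> * \<bar>\<tau> k\<bar>"] sa by (simp add: abs_mult mult.assoc)
      note sc = ellp_scale[OF DY_D[OF s t] p0, of "supnorm \<alpha>"]
      have "ellp_norm p (\<lambda>k. (\<alpha> k * \<sigma> k) * \<tau> k) \<le> supnorm \<alpha> * ellp_norm p (\<lambda>k. \<sigma> k * \<tau> k)"
        using ellp_mono(3)[OF sc(1) p0 le] sc(2) sa by simp
      also have "\<dots> \<le> supnorm \<alpha> * (ND \<sigma> * N \<tau>)" using ND_bound[OF s t] sa by (intro mult_left_mono)
      finally show ?thesis using ellp_mono(1)[OF sc(1) p0 le] by (simp add: mult.assoc)
    qed
    show "(\<lambda>k. \<alpha> k * \<sigma> k) \<in> DY" "ND (\<lambda>k. \<alpha> k * \<sigma> k) \<le> supnorm \<alpha> * ND \<sigma>"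
      using DY_intro[OF h] sa ND_nonneg[OF s] by auto
  qed
next
  fix k
  have h: "(\<lambda>j. unitvec k j * \<tau> j) \<in> ellp p \<and> ellp_norm p (\<lambda>j. unitvec k j * \<tau> j) \<le> 1 * N \<tau>"
    if t: "\<tau> \<in> X" for \<tau>
    using ellp_unit[OF p0, of \<tau> k] coord_le[OF t, of k] by (simp add: mult.commute)
  show "unitvec k \<in> DY" using DY_intro(1)[OF h] by simp
  have "ND (unitvec k) \<le> 1" using DY_intro(2)[OF h] by simp
  moreover have "ellp_norm p (\<lambda>j. unitvec k j * unitvec k j) \<le> ND (unitvec k)"
    using ND_upper[OF DY_intro(1)[OF h] unit_mem[of k]] unit_norm by simp
  moreover have "ellp_norm p (\<lambda>j. unitvec k j * unitvec k j) = 1"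
    using ellp_unit[OF p0, of "unitvec k" k] by (simp add: unitvec_def)
  ultimately show "ND (unitvec k) = 1" by simp
qed

end



context pre_ms_p
begin

interpretation DYI: pre_ms DY ND by (rule DY_pre_ms)

lemma DY_fatou_le:
  assumes b: "\<And>n. ND (trunc n \<sigma>) \<le> C"
  shows "\<sigma> \<in> DY" "ND \<sigma> \<le> C"
proof -
  have C0: "0 \<le> C" using b[of 0] DYI.nonneg[OF DYI.trunc_mem_norm[THEN conjunct1, of 0 \<sigma>]] by linarith
  have h: "(\<lambda>k. \<sigma> k * \<tau> k) \<in> ellp p \<and> ellp_norm p (\<lambda>k. \<sigma> k * \<tau> k) \<le> C * N \<tau>" if t: "\<tau> \<in> X" for \<tau>
  proof -
    have CN: "0 \<le> C * N \<tau>" using C0 nonneg[OF t] by simp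
    have part: "(\<Sum>k<n. \<bar>\<sigma> k * \<tau> k\<bar> powr p) \<le> (C * N \<tau>) powr p" for n
    proof -
      have tm: "trunc n \<sigma> \<in> DY" using DYI.trunc_mem_norm by blast
      have z: "\<And>k. k \<ge> n \<Longrightarrow> trunc n \<sigma> k * \<tau> k = 0" by (simp add: trunc_def)
      have "(\<Sum>k<n. \<bar>\<sigma> k * \<tau> k\<bar> powr p) = (\<Sum>k<n. \<bar>trunc n \<sigma> k * \<tau> k\<bar> powr p)"
        by (rule sum.cong) (auto simp: trunc_def)
      also have "\<dots> = (\<Sum>k. \<bar>trunc n \<sigma> k * \<tau> k\<bar> powr p)" using ellp_finsupp(2)[OF z p0] by simp
      also have "\<dots> \<le> (C * N \<tau>) powr p"
      proof -
        have "ellp_norm p (\<lambda>k. trunc n \<sigma> k * \<tau> k) \<le> ND (trunc n \<sigma>) * N \<tau>" by (rule ND_bound[OF tm t])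
        also have "\<dots> \<le> C * N \<tau>" using b[of n] nonneg[OF t] by (intro mult_right_mono) auto
        finally show ?thesis using ellp_norm_le_iff[OF DY_D[OF tm t] p0 CN] by simp
      qed
      finally show ?thesis .
    qed
    have m: "(\<lambda>k. \<sigma> k * \<tau> k) \<in> ellp p" by (rule ellp_bounded_partial(1)[OF part])
    have "(\<Sum>k. \<bar>\<sigma> k * \<tau> k\<bar> powr p) \<le> (C * N \<tau>) powr p" by (rule ellp_bounded_partial(2)[OF part])
    then show ?thesis using m ellp_norm_le_iff[OF m p0 CN] by simp
  qed
  show "\<sigma> \<in> DY" "ND \<sigma> \<le> C" using DY_intro[OF h C0] by auto
qed

lemma DY_fatou: "fatou_prop DY ND"
  unfolding fatou_prop_def
proof (intro conjI allI ballI)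
  fix \<sigma>
  show "\<sigma> \<in> DY \<longleftrightarrow> bdd_above (range (\<lambda>n. ND (trunc n \<sigma>)))"
  proof
    assume "\<sigma> \<in> DY"
    then show "bdd_above (range (\<lambda>n. ND (trunc n \<sigma>)))" using DYI.trunc_mono by (intro bdd_aboveI2) auto
  next
    assume "bdd_above (range (\<lambda>n. ND (trunc n \<sigma>)))"
    then obtain C where "\<And>n. ND (trunc n \<sigma>) \<le> C" by (auto simp: bdd_above_def)
    then show "\<sigma> \<in> DY" by (rule DY_fatou_le)
  qed
next
  fix \<sigma> assume s: "\<sigma> \<in> DY"
  have bd: "bdd_above (range (\<lambda>n. ND (trunc n \<sigma>)))" using DYI.trunc_mono[OF s] by (intro bdd_aboveI2) auto
  have "ND \<sigma> \<le> (SUP n. ND (trunc n \<sigma>))"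
    by (rule DY_fatou_le(2)) (rule cSUP_upper[OF _ bd], simp)
  moreover have "(SUP n. ND (trunc n \<sigma>)) \<le> ND \<sigma>"
    by (rule cSUP_least) (use DYI.trunc_mono[OF s] in auto)
  ultimately show "ND \<sigma> = (SUP n. ND (trunc n \<sigma>))" by simp
qed

lemma DY_maximal: "maximal_seq_space DY ND"
  by (rule DYI.maximal_of_fatou[OF DY_fatou])

lemma DY_pre_ms_p: "pre_ms_p DY ND p"
  by (intro pre_ms_p.intro DY_pre_ms pre_ms_p_axioms.intro p1)

interpretation DYP: pre_ms_p DY ND p by (rule DY_pre_ms_p)

lemma X_sub_bidual:
  assumes s: "\<sigma> \<in> X"
  shows "\<sigma> \<in> DYP.DY" "DYP.ND \<sigma> \<le> N \<sigma>"
proof -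
  have h: "(\<lambda>k. \<sigma> k * \<tau> k) \<in> ellp p \<and> ellp_norm p (\<lambda>k. \<sigma> k * \<tau> k) \<le> N \<sigma> * ND \<tau>" if t: "\<tau> \<in> DY" for \<tau>
    using DY_D[OF t s] ND_bound[OF t s] by (simp add: mult.commute)
  show "\<sigma> \<in> DYP.DY" "DYP.ND \<sigma> \<le> N \<sigma>" using DYP.DY_intro[OF h nonneg[OF s]] by auto
qed

end



definition sublin :: "(seq \<Rightarrow> real) \<Rightarrow> bool" where
  "sublin q \<longleftrightarrow> (\<forall>u v. q (\<lambda>k. u k + v k) \<le> q u + q v) \<and> (\<forall>t u. t \<ge> 0 \<longrightarrow> q (\<lambda>k. t * u k) = t * q u)"

lemma sublin_add: "sublin q \<Longrightarrow> q (\<lambda>k. u k + v k) \<le> q u + q v"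
  unfolding sublin_def by blast
lemma sublin_hom: "sublin q \<Longrightarrow> t \<ge> 0 \<Longrightarrow> q (\<lambda>k. t * u k) = t * q u"
  unfolding sublin_def by blast
lemma sublin_zero: "sublin q \<Longrightarrow> q (\<lambda>k. 0) = 0"
  using sublin_hom[of q 0 "\<lambda>k. 0"] by simp
lemma sublin_neg: assumes "sublin q" shows "0 \<le> q u + q (\<lambda>k. - u k)"
  using sublin_add[OF assms, of u "\<lambda>k. - u k"] sublin_zero[OF assms] by simp
lemma sublin_lower: assumes q: "sublin q" shows "t * q u \<le> q (\<lambda>k. t * u k)"
proof (cases "t \<ge> 0")
  case True then show ?thesis using sublin_hom[OF q True] by simp
next
  case False
  have "q (\<lambda>k. t * u k) = q (\<lambda>k. (- t) * (- u k))" by simp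
  also have "\<dots> = (- t) * q (\<lambda>k. - u k)" using False by (intro sublin_hom[OF q]) auto
  finally have e: "q (\<lambda>k. t * u k) = (- t) * q (\<lambda>k. - u k)" .
  have "0 \<le> (- t) * (q u + q (\<lambda>k. - u k))" by (intro mult_nonneg_nonneg) (use False sublin_neg[OF q, of u] in auto)
  then show ?thesis unfolding e by (simp add: algebra_simps)
qed

definition qred :: "(seq \<Rightarrow> real) \<Rightarrow> seq \<Rightarrow> seq \<Rightarrow> real" where
  "qred q d u = (INF t. q (\<lambda>k. u k + t * d k) - t * q d)"

lemma qred_bdd:
  assumes q: "sublin q"
  shows "bdd_below (range (\<lambda>t. q (\<lambda>k. u k + t * d k) - t * q d))"
proof (rule bdd_belowI2)
  fix t
  have "q (\<lambda>k. t * d k) \<le> q (\<lambda>k. u k + t * d k) + q (\<lambda>k. - u k)"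
    using sublin_add[OF q, of "\<lambda>k. u k + t * d k" "\<lambda>k. - u k"] by simp
  then show "- q (\<lambda>k. - u k) \<le> q (\<lambda>k. u k + t * d k) - t * q d"
    using sublin_lower[OF q, of t d] by linarith
qed

lemma qred_lower: "sublin q \<Longrightarrow> qred q d u \<le> q (\<lambda>k. u k + t * d k) - t * q d"
  unfolding qred_def by (rule cINF_lower[OF qred_bdd]) auto

lemma qred_greatest: "(\<And>t. C \<le> q (\<lambda>k. u k + t * d k) - t * q d) \<Longrightarrow> C \<le> qred q d u"
  unfolding qred_def by (rule cINF_greatest) auto

lemma qred_le: "sublin q \<Longrightarrow> qred q d u \<le> q u"
  using qred_lower[of q d u 0] by simp

lemma qred_sublin:
  assumes q: "sublin q"
  shows "sublin (qred q d)"
  unfolding sublin_def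
proof (intro conjI allI impI)
  fix u v
  have "qred q d (\<lambda>k. u k + v k) - (q (\<lambda>k. v k + t2 * d k) - t2 * q d) \<le> qred q d u" for t2
  proof (rule qred_greatest)
    fix t1
    have "qred q d (\<lambda>k. u k + v k) \<le> q (\<lambda>k. (u k + v k) + (t1 + t2) * d k) - (t1 + t2) * q d"
      by (rule qred_lower[OF q])
    also have "q (\<lambda>k. (u k + v k) + (t1 + t2) * d k) \<le> q (\<lambda>k. u k + t1 * d k) + q (\<lambda>k. v k + t2 * d k)"
      using sublin_add[OF q, of "\<lambda>k. u k + t1 * d k" "\<lambda>k. v k + t2 * d k"] by (simp add: algebra_simps)
    finally show "qred q d (\<lambda>k. u k + v k) - (q (\<lambda>k. v k + t2 * d k) - t2 * q d) \<le> q (\<lambda>k. u k + t1 * d k) - t1 * q d"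
      by (simp add: algebra_simps)
  qed
  note A = this
  have "qred q d (\<lambda>k. u k + v k) - qred q d u \<le> q (\<lambda>k. v k + t2 * d k) - t2 * q d" for t2
    using A[of t2] by linarith
  then have "qred q d (\<lambda>k. u k + v k) - qred q d u \<le> qred q d v" by (rule qred_greatest)
  then show "qred q d (\<lambda>k. u k + v k) \<le> qred q d u + qred q d v" by simp
next
  fix t :: real and u assume t: "0 \<le> t"
  show "qred q d (\<lambda>k. t * u k) = t * qred q d u"
  proof (cases "t = 0")
    case True
    have "qred q d (\<lambda>k. 0) \<le> 0" using qred_le[OF q, of d "\<lambda>k. 0"] sublin_zero[OF q] by simp
    moreover have "0 \<le> qred q d (\<lambda>k. 0)"
      by (rule qred_greatest) (use sublin_lower[OF q] in simp)
    ultimately show ?thesis using True by simp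
  next
    case False
    then have tp: "0 < t" using t by simp
    have "t * qred q d u \<le> qred q d (\<lambda>k. t * u k)"
    proof (rule qred_greatest)
      fix s
      have e: "(\<lambda>k. t * u k + s * d k) = (\<lambda>k. t * (u k + (s / t) * d k))" using tp by (auto simp: field_simps)
      have "qred q d u \<le> q (\<lambda>k. u k + (s / t) * d k) - (s / t) * q d" by (rule qred_lower[OF q])
      then have "t * qred q d u \<le> t * (q (\<lambda>k. u k + (s / t) * d k) - (s / t) * q d)" using tp by simp
      also have "\<dots> = t * q (\<lambda>k. u k + (s / t) * d k) - s * q d" using tp by (simp add: right_diff_distrib)
      also have "\<dots> = q (\<lambda>k. t * u k + s * d k) - s * q d"
        unfolding e sublin_hom[OF q t] ..
      finally show "t * qred q d u \<le> q (\<lambda>k. t * u k + s * d k) - s * q d" .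
    qed
    moreover have "qred q d (\<lambda>k. t * u k) / t \<le> qred q d u"
    proof (rule qred_greatest)
      fix s
      have e: "(\<lambda>k. t * u k + (t * s) * d k) = (\<lambda>k. t * (u k + s * d k))" by (auto simp: algebra_simps)
      have "qred q d (\<lambda>k. t * u k) \<le> q (\<lambda>k. t * u k + (t * s) * d k) - (t * s) * q d" by (rule qred_lower[OF q])
      also have "\<dots> = t * (q (\<lambda>k. u k + s * d k) - s * q d)"
        unfolding e sublin_hom[OF q t] by (simp add: algebra_simps)
      finally show "qred q d (\<lambda>k. t * u k) / t \<le> q (\<lambda>k. u k + s * d k) - s * q d"
        using tp by (simp add: field_simps mult.commute)
    qed
    then have "qred q d (\<lambda>k. t * u k) \<le> t * qred q d u" using tp by (simp add: field_simps mult.commute)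
    ultimately show ?thesis by simp
  qed
qed

lemma trunc_add: "trunc n (\<lambda>k. u k + v k) = (\<lambda>k. trunc n u k + trunc n v k)"
  by (auto simp: trunc_def)
lemma trunc_scale: "trunc n (\<lambda>k. t * u k) = (\<lambda>k. t * trunc n u k)"
  by (auto simp: trunc_def)
lemma trunc_trunc: "trunc n (trunc n u) = trunc n u"
  by (auto simp: trunc_def)

lemma sublin_trunc: "sublin q \<Longrightarrow> sublin (\<lambda>u. q (trunc n u))"
  unfolding sublin_def trunc_add trunc_scale by blast

lemma hb_dom:
  "\<forall>q. sublin q \<and> (\<forall>u. q u = q (trunc n u)) \<longrightarrow> (\<exists>w. \<forall>u. (\<Sum>k<n. w k * u k) \<le> q u)"
proof (induction n)
  case 0
  show ?case
  proof (intro allI impI)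
    fix q :: "seq \<Rightarrow> real" assume h: "sublin q \<and> (\<forall>u. q u = q (trunc 0 u))"
    have t0: "trunc 0 u = (\<lambda>k. 0)" for u by (simp add: trunc_def)
    have "q u = 0" for u
    proof -
      have "q u = q (trunc 0 u)" using h by blast
      also have "\<dots> = 0" unfolding t0 using h sublin_zero[of q] by blast
      finally show ?thesis .
    qed
    then show "\<exists>w. \<forall>u. (\<Sum>k<0. w k * u k) \<le> q u" by simp
  qed
next
  case (Suc n)
  show ?case
  proof (intro allI impI)
    fix q :: "seq \<Rightarrow> real" assume h: "sublin q \<and> (\<forall>u. q u = q (trunc (Suc n) u))"
    then have q: "sublin q" and dep: "\<And>u. q u = q (trunc (Suc n) u)" by auto
    define q2 where "q2 = (\<lambda>u. qred q (unitvec n) (trunc n u))"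
    have s2: "sublin q2" unfolding q2_def by (rule sublin_trunc[OF qred_sublin[OF q]])
    have d2: "q2 u = q2 (trunc n u)" for u unfolding q2_def trunc_trunc ..
    obtain w' where w': "\<And>u. (\<Sum>k<n. w' k * u k) \<le> q2 u" using Suc.IH s2 d2 by blast
    define w where "w = w'(n := q (unitvec n))"
    have "(\<Sum>k<Suc n. w k * u k) \<le> q u" for u
    proof -
      have "(\<Sum>k<Suc n. w k * u k) = (\<Sum>k<n. w' k * u k) + q (unitvec n) * u n"
        unfolding w_def by (simp add: sum.lessThan_Suc)
      also have "\<dots> \<le> q2 u + q (unitvec n) * u n" using w'[of u] by simp
      also have "q2 u \<le> q (\<lambda>k. trunc n u k + u n * unitvec n k) - u n * q (unitvec n)"
        unfolding q2_def by (rule qred_lower[OF q])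
      also have "(\<lambda>k. trunc n u k + u n * unitvec n k) = trunc (Suc n) u"
        by (auto simp: trunc_def unitvec_def less_Suc_eq)
      finally show ?thesis using dep[of u] by simp
    qed
    then show "\<exists>w. \<forall>u. (\<Sum>k<Suc n. w k * u k) \<le> q u" by blast
  qed
qed

lemma hb_point:
  assumes q: "sublin q" and dep: "\<And>u. q u = q (trunc n u)"
  shows "\<exists>w. (\<forall>u. (\<Sum>k<n. w k * u k) \<le> q u) \<and> (\<Sum>k<n. w k * u0 k) = q u0"
proof -
  define q2 where "q2 = qred q u0"
  have s2: "sublin q2" unfolding q2_def by (rule qred_sublin[OF q])
  have d2: "q2 u = q2 (trunc n u)" for u
  proof -
    have "q (\<lambda>k. u k + t * u0 k) = q (\<lambda>k. trunc n u k + t * u0 k)" for t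
    proof -
      have e: "trunc n (\<lambda>k. u k + t * u0 k) = trunc n (\<lambda>k. trunc n u k + t * u0 k)" by (auto simp: trunc_def)
      show ?thesis using dep[of "\<lambda>k. u k + t * u0 k"] dep[of "\<lambda>k. trunc n u k + t * u0 k"] e by simp
    qed
    then show ?thesis unfolding q2_def qred_def by simp
  qed
  obtain w where w: "\<And>u. (\<Sum>k<n. w k * u k) \<le> q2 u" using hb_dom[of n] s2 d2 by blast
  have le: "(\<Sum>k<n. w k * u k) \<le> q u" for u using w[of u] qred_le[OF q, of u0 u] unfolding q2_def by simp
  have "(\<Sum>k<n. w k * (- u0 k)) \<le> q2 (\<lambda>k. - u0 k)" by (rule w)
  also have "\<dots> \<le> q (\<lambda>k. - u0 k + 1 * u0 k) - 1 * q u0" unfolding q2_def by (rule qred_lower[OF q])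
  finally have "- (\<Sum>k<n. w k * u0 k) \<le> - q u0" using sublin_zero[OF q] by (simp add: sum_negf)
  then show ?thesis using le[of u0] le by force
qed



lemma ellinf_bound: "u \<in> ellinf \<Longrightarrow> \<exists>C. \<forall>k. \<bar>u k\<bar> \<le> C"
  unfolding ellinf_def bdd_above_def by auto

lemma powr_sum_le2:
  fixes a b r :: real
  assumes "0 \<le> a" "0 \<le> b" "0 < r" "r \<le> 1"
  shows "(a + b) powr r \<le> 2 * (a powr r + b powr r)"
proof -
  have "(a + b) powr r \<le> (2 * max a b) powr r" using assms by (intro powr_mono2) auto
  also have "\<dots> = 2 powr r * (max a b) powr r" using assms by (simp add: powr_mult)
  also have "2 powr r \<le> 2" using assms powr_le_cancel_iff[of 2 r 1] by simp
  then have "2 powr r * (max a b) powr r \<le> 2 * (max a b) powr r" by (intro mult_right_mono) auto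
  also have "(max a b) powr r \<le> a powr r + b powr r" by (cases "a \<le> b") (auto simp: max_def)
  finally show ?thesis by simp
qed

lemma sum_split_nat: "(\<Sum>k<m1 + (m2::nat). f k) = (\<Sum>k<m1. f k) + (\<Sum>k<m2. f (m1 + k))"
  by (induction m2) (auto simp: sum.lessThan_Suc add.assoc)

context pre_ms_p
begin

lemma Xp_iff: "u \<in> Xp X p \<longleftrightarrow> u \<in> ellinf \<and> (\<lambda>k. \<bar>u k\<bar> powr (1/p)) \<in> X"
  unfolding Xp_def by blast

lemma Xp_zero: "(\<lambda>k. 0) \<in> Xp X p"
  unfolding Xp_iff using zero_mem by (auto intro: bdd_ellinf[of _ 0])

lemma Xp_add:
  assumes u: "u \<in> Xp X p" and v: "v \<in> Xp X p"
  shows "(\<lambda>k. u k + v k) \<in> Xp X p"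
proof -
  obtain C1 C2 where C: "\<And>k. \<bar>u k\<bar> \<le> C1" "\<And>k. \<bar>v k\<bar> \<le> C2"
    using u v ellinf_bound unfolding Xp_iff by metis
  have inf: "(\<lambda>k. u k + v k) \<in> ellinf"
    by (rule bdd_ellinf[of _ "C1 + C2"]) (use C in \<open>auto intro: order_trans[OF abs_triangle_ineq] add_mono\<close>)
  define w where "w = (\<lambda>k. 2 * (\<bar>u k\<bar> powr (1/p) + \<bar>v k\<bar> powr (1/p)))"
  have wX: "w \<in> X" unfolding w_def using u v unfolding Xp_iff by (intro scale_mem add_mem) auto
  have "(\<lambda>k. \<bar>u k + v k\<bar> powr (1/p)) \<in> X"
  proof (rule mono(1)[OF wX])
    fix k
    have "\<bar>u k + v k\<bar> powr (1/p) \<le> (\<bar>u k\<bar> + \<bar>v k\<bar>) powr (1/p)" using p0 by (intro powr_mono2) auto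
    also have "\<dots> \<le> w k" unfolding w_def using p1 by (intro powr_sum_le2) auto
    finally show "\<bar>\<bar>u k + v k\<bar> powr (1/p)\<bar> \<le> \<bar>w k\<bar>" by simp
  qed
  then show ?thesis using inf unfolding Xp_iff by blast
qed

lemma Xp_scale:
  assumes u: "u \<in> Xp X p"
  shows "(\<lambda>k. a * u k) \<in> Xp X p"
proof -
  obtain C where C: "\<And>k. \<bar>u k\<bar> \<le> C" using u ellinf_bound unfolding Xp_iff by metis
  have inf: "(\<lambda>k. a * u k) \<in> ellinf"
    by (rule bdd_ellinf[of _ "\<bar>a\<bar> * C"]) (use C in \<open>auto simp: abs_mult intro: mult_left_mono\<close>)
  have e: "(\<lambda>k. \<bar>a * u k\<bar> powr (1/p)) = (\<lambda>k. \<bar>a\<bar> powr (1/p) * \<bar>u k\<bar> powr (1/p))"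
    by (auto simp: abs_mult powr_mult)
  have "(\<lambda>k. \<bar>a * u k\<bar> powr (1/p)) \<in> X" unfolding e using u unfolding Xp_iff by (intro scale_mem) auto
  then show ?thesis using inf unfolding Xp_iff by blast
qed

lemma Xp_trunc: "trunc n u \<in> Xp X p"
proof -
  have inf: "trunc n u \<in> ellinf"
  proof (rule bdd_ellinf[of _ "\<Sum>j<n. \<bar>u j\<bar>"])
    fix k show "\<bar>trunc n u k\<bar> \<le> (\<Sum>j<n. \<bar>u j\<bar>)"
      by (cases "k < n") (auto simp: trunc_def intro: member_le_sum)
  qed
  have e: "(\<lambda>k. \<bar>trunc n u k\<bar> powr (1/p)) = trunc n (\<lambda>k. \<bar>u k\<bar> powr (1/p))"
    by (auto simp: trunc_def)
  show ?thesis unfolding Xp_iff e using inf trunc_mem_norm by blast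
qed

lemma Xp_pow:
  assumes s: "\<sigma> \<in> X"
  shows "(\<lambda>k. \<bar>\<sigma> k\<bar> powr p) \<in> Xp X p"
proof -
  have inf: "(\<lambda>k. \<bar>\<sigma> k\<bar> powr p) \<in> ellinf"
    by (rule bdd_ellinf[of _ "N \<sigma> powr p"]) (use coord_le[OF s] p0 in \<open>auto intro: powr_mono2\<close>)
  have e: "(\<lambda>k. \<bar>\<bar>\<sigma> k\<bar> powr p\<bar> powr (1/p)) = (\<lambda>k. \<bar>\<sigma> k\<bar>)"
    using p0 by (auto simp: powr_powr)
  show ?thesis unfolding Xp_iff e using inf abs_mem[OF s] by blast
qed

end

locale pconv = pre_ms_p +
  fixes c :: real
  assumes c0: "0 < c" and pc: "pconv_ineq X N p c"
begin

definition decomp :: "seq \<Rightarrow> nat \<Rightarrow> (nat \<Rightarrow> seq) \<Rightarrow> bool" where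
  "decomp u m x \<longleftrightarrow> (\<forall>k<m. x k \<in> X) \<and> (\<forall>j. \<bar>u j\<bar> \<le> (\<Sum>k<m. \<bar>x k j\<bar> powr p))"

definition Fset :: "seq \<Rightarrow> real set" where
  "Fset u = {(\<Sum>k<m. N (x k) powr p) | m x. decomp u m x}"

definition F :: "seq \<Rightarrow> real" where
  "F u = Inf (Fset u)"

lemma Fset_bdd: "bdd_below (Fset u)"
  unfolding Fset_def by (rule bdd_belowI[of _ 0]) (auto intro: sum_nonneg)

lemma F_le: "s \<in> Fset u \<Longrightarrow> F u \<le> s"
  unfolding F_def by (rule cInf_lower[OF _ Fset_bdd])

lemma F_ge: "Fset u \<noteq> {} \<Longrightarrow> (\<And>s. s \<in> Fset u \<Longrightarrow> C \<le> s) \<Longrightarrow> C \<le> F u"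
  unfolding F_def by (rule cInf_greatest)

lemma Fset_mem: "u \<in> Xp X p \<Longrightarrow> N (\<lambda>j. \<bar>u j\<bar> powr (1/p)) powr p \<in> Fset u"
proof -
  assume u: "u \<in> Xp X p"
  have "decomp u 1 (\<lambda>k j. \<bar>u j\<bar> powr (1/p))"
    unfolding decomp_def using u p0 unfolding Xp_iff by (auto simp: powr_powr)
  then show ?thesis unfolding Fset_def by force
qed

lemma Fset_ne: "u \<in> Xp X p \<Longrightarrow> Fset u \<noteq> {}" using Fset_mem by blast

lemma F_upper: "u \<in> Xp X p \<Longrightarrow> F u \<le> N (\<lambda>j. \<bar>u j\<bar> powr (1/p)) powr p"
  using F_le Fset_mem by blast

lemma decomp_lower:
  assumes d: "decomp u m x"
  shows "(\<lambda>j. \<bar>u j\<bar> powr (1/p)) \<in> X" "(N (\<lambda>j. \<bar>u j\<bar> powr (1/p)) / c) powr p \<le> (\<Sum>k<m. N (x k) powr p)"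
proof -
  have xX: "\<forall>k<m. x k \<in> X" using d unfolding decomp_def by blast
  define y where "y = (\<lambda>j. (\<Sum>k<m. \<bar>x k j\<bar> powr p) powr (1/p))"
  have yX: "y \<in> X" and Ny: "N y \<le> c * (\<Sum>k<m. N (x k) powr p) powr (1/p)"
    using pc xX unfolding pconv_ineq_def y_def by blast+
  have le: "\<bar>\<bar>u j\<bar> powr (1/p)\<bar> \<le> \<bar>y j\<bar>" for j
  proof -
    have "\<bar>u j\<bar> powr (1/p) \<le> y j" unfolding y_def using d p0 unfolding decomp_def by (intro powr_mono2) auto
    then show ?thesis by simp
  qed
  show m: "(\<lambda>j. \<bar>u j\<bar> powr (1/p)) \<in> X" by (rule mono(1)[OF yX le])
  have "N (\<lambda>j. \<bar>u j\<bar> powr (1/p)) \<le> c * (\<Sum>k<m. N (x k) powr p) powr (1/p)"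
    using mono(2)[OF yX le] Ny by linarith
  then have "N (\<lambda>j. \<bar>u j\<bar> powr (1/p)) / c \<le> (\<Sum>k<m. N (x k) powr p) powr (1/p)"
    using c0 by (simp add: field_simps mult.commute)
  moreover have S0: "0 \<le> (\<Sum>k<m. N (x k) powr p)" by (intro sum_nonneg) simp
  ultimately show "(N (\<lambda>j. \<bar>u j\<bar> powr (1/p)) / c) powr p \<le> (\<Sum>k<m. N (x k) powr p)"
    using powr_inv_ge_iff[OF p0 S0, of "N (\<lambda>j. \<bar>u j\<bar> powr (1/p)) / c"]
      nonneg[OF m] c0 by simp
qed

lemma F_lower: "u \<in> Xp X p \<Longrightarrow> (N (\<lambda>j. \<bar>u j\<bar> powr (1/p)) / c) powr p \<le> F u"
  by (rule F_ge[OF Fset_ne]) (auto simp: Fset_def intro: decomp_lower)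

lemma F_nonneg: "u \<in> Xp X p \<Longrightarrow> 0 \<le> F u"
  using F_lower[of u] by (meson order_trans powr_ge_zero)

lemma F_mono:
  assumes v: "v \<in> Xp X p" and le: "\<And>k. \<bar>u k\<bar> \<le> \<bar>v k\<bar>"
  shows "F u \<le> F v"
proof (rule F_ge[OF Fset_ne[OF v]])
  fix s assume "s \<in> Fset v"
  then obtain m x where s: "s = (\<Sum>k<m. N (x k) powr p)" and d: "decomp v m x" unfolding Fset_def by blast
  have "decomp u m x" using d le unfolding decomp_def by (meson order_trans)
  then have "s \<in> Fset u" unfolding Fset_def s by blast
  then show "F u \<le> s" by (rule F_le)
qed

lemma Fset_add:
  assumes s1: "s1 \<in> Fset u" and s2: "s2 \<in> Fset v"
  shows "s1 + s2 \<in> Fset (\<lambda>k. u k + v k)"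
proof -
  obtain m1 x1 where e1: "s1 = (\<Sum>k<m1. N (x1 k) powr p)" and d1: "decomp u m1 x1" using s1 unfolding Fset_def by blast
  obtain m2 x2 where e2: "s2 = (\<Sum>k<m2. N (x2 k) powr p)" and d2: "decomp v m2 x2" using s2 unfolding Fset_def by blast
  define x where "x = (\<lambda>k. if k < m1 then x1 k else x2 (k - m1))"
  have sp: "(\<Sum>k<m1 + m2. f (x k)) = (\<Sum>k<m1. f (x1 k)) + (\<Sum>k<m2. f (x2 k))" for f :: "seq \<Rightarrow> real"
    unfolding sum_split_nat x_def by simp
  have "decomp (\<lambda>k. u k + v k) (m1 + m2) x"
    unfolding decomp_def
  proof (intro conjI allI impI)
    fix k assume "k < m1 + m2"
    then show "x k \<in> X" using d1 d2 unfolding decomp_def x_def by auto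
  next
    fix j
    have "\<bar>u j + v j\<bar> \<le> \<bar>u j\<bar> + \<bar>v j\<bar>" by (rule abs_triangle_ineq)
    also have "\<dots> \<le> (\<Sum>k<m1. \<bar>x1 k j\<bar> powr p) + (\<Sum>k<m2. \<bar>x2 k j\<bar> powr p)"
      using d1 d2 unfolding decomp_def by (intro add_mono) auto
    also have "\<dots> = (\<Sum>k<m1 + m2. \<bar>x k j\<bar> powr p)" using sp[of "\<lambda>y. \<bar>y j\<bar> powr p"] by simp
    finally show "\<bar>u j + v j\<bar> \<le> (\<Sum>k<m1 + m2. \<bar>x k j\<bar> powr p)" .
  qed
  moreover have "s1 + s2 = (\<Sum>k<m1 + m2. N (x k) powr p)" using sp[of "\<lambda>y. N y powr p"] e1 e2 by simp
  ultimately show ?thesis unfolding Fset_def by blast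
qed

lemma F_add:
  assumes u: "u \<in> Xp X p" and v: "v \<in> Xp X p"
  shows "F (\<lambda>k. u k + v k) \<le> F u + F v"
proof -
  have "F (\<lambda>k. u k + v k) - s2 \<le> F u" if s2: "s2 \<in> Fset v" for s2
  proof (rule F_ge[OF Fset_ne[OF u]])
    fix s1 assume "s1 \<in> Fset u"
    then have "F (\<lambda>k. u k + v k) \<le> s1 + s2" using Fset_add s2 F_le by blast
    then show "F (\<lambda>k. u k + v k) - s2 \<le> s1" by simp
  qed
  then have "F (\<lambda>k. u k + v k) - F u \<le> F v"
    by (intro F_ge[OF Fset_ne[OF v]]) (smt (verit))
  then show ?thesis by simp
qed

lemma Fset_scale:
  assumes s: "s \<in> Fset u"
  shows "\<bar>a\<bar> * s \<in> Fset (\<lambda>k. a * u k)"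
proof -
  obtain m x where e: "s = (\<Sum>k<m. N (x k) powr p)" and d: "decomp u m x" using s unfolding Fset_def by blast
  define t where "t = \<bar>a\<bar> powr (1/p)"
  have t0: "0 \<le> t" unfolding t_def by simp
  have tp: "(t * y) powr p = \<bar>a\<bar> * y powr p" if "0 \<le> y" for y
    using that t0 p0 by (simp add: t_def powr_mult powr_powr)
  define x' where "x' = (\<lambda>k j. t * x k j)"
  have "decomp (\<lambda>k. a * u k) m x'"
    unfolding decomp_def
  proof (intro conjI allI impI)
    fix k assume "k < m" then show "x' k \<in> X" using d unfolding decomp_def x'_def by (auto intro: scale_mem)
  next
    fix j
    have "\<bar>a * u j\<bar> = \<bar>a\<bar> * \<bar>u j\<bar>" by (simp add: abs_mult)
    also have "\<dots> \<le> \<bar>a\<bar> * (\<Sum>k<m. \<bar>x k j\<bar> powr p)" using d unfolding decomp_def by (intro mult_left_mono) auto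
    also have "\<dots> = (\<Sum>k<m. \<bar>x' k j\<bar> powr p)"
      unfolding sum_distrib_left x'_def using tp t0 by (intro sum.cong) (auto simp: abs_mult)
    finally show "\<bar>a * u j\<bar> \<le> (\<Sum>k<m. \<bar>x' k j\<bar> powr p)" .
  qed
  moreover have "\<bar>a\<bar> * s = (\<Sum>k<m. N (x' k) powr p)"
  proof -
    have "N (x' k) powr p = \<bar>a\<bar> * N (x k) powr p" if "k < m" for k
    proof -
      have xk: "x k \<in> X" using d that unfolding decomp_def by blast
      have "N (x' k) = t * N (x k)" using homog[OF xk, of t] t0 unfolding x'_def by simp
      then show ?thesis using tp[OF nonneg[OF xk]] by simp
    qed
    then show ?thesis unfolding e sum_distrib_left by (intro sum.cong) auto
  qed
  ultimately show ?thesis unfolding Fset_def by blast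
qed

lemma F_scale_le:
  assumes u: "u \<in> Xp X p"
  shows "F (\<lambda>k. a * u k) \<le> \<bar>a\<bar> * F u"
proof (cases "a = 0")
  case True
  obtain s where "s \<in> Fset u" using Fset_ne[OF u] by blast
  then have "F (\<lambda>k. a * u k) \<le> \<bar>a\<bar> * s" using Fset_scale F_le by blast
  then show ?thesis using True by simp
next
  case False
  have "F (\<lambda>k. a * u k) / \<bar>a\<bar> \<le> F u"
  proof (rule F_ge[OF Fset_ne[OF u]])
    fix s assume "s \<in> Fset u"
    then have "F (\<lambda>k. a * u k) \<le> \<bar>a\<bar> * s" using Fset_scale F_le by blast
    then show "F (\<lambda>k. a * u k) / \<bar>a\<bar> \<le> s" using False by (simp add: field_simps mult.commute)
  qed
  then show ?thesis using False by (simp add: field_simps mult.commute)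
qed

lemma F_zero: "F (\<lambda>k. 0) = 0"
proof -
  have "F (\<lambda>k. 0) \<le> 0" using F_scale_le[OF Xp_zero, of 0] by simp
  then show ?thesis using F_nonneg[OF Xp_zero] by simp
qed

lemma F_scale:
  assumes u: "u \<in> Xp X p"
  shows "F (\<lambda>k. a * u k) = \<bar>a\<bar> * F u"
proof (cases "a = 0")
  case True then show ?thesis using F_zero by simp
next
  case False
  have "F (\<lambda>k. (1 / a) * (a * u k)) \<le> \<bar>1 / a\<bar> * F (\<lambda>k. a * u k)"
    by (rule F_scale_le[OF Xp_scale[OF u]])
  then have "F u \<le> \<bar>1 / a\<bar> * F (\<lambda>k. a * u k)" using False by simp
  then have "\<bar>a\<bar> * F u \<le> F (\<lambda>k. a * u k)" using False by (simp add: field_simps)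
  then show ?thesis using F_scale_le[OF u, of a] by simp
qed

lemma F_normed: "normed_seq_space (Xp X p) F"
  unfolding normed_seq_space_def
proof (intro conjI ballI allI)
  show "(\<lambda>k. 0) \<in> Xp X p" by (rule Xp_zero)
next
  fix x y assume "x \<in> Xp X p" "y \<in> Xp X p"
  then show "(\<lambda>k. x k + y k) \<in> Xp X p" "F (\<lambda>k. x k + y k) \<le> F x + F y" using Xp_add F_add by auto
next
  fix a :: real and x assume "x \<in> Xp X p"
  then show "(\<lambda>k. a * x k) \<in> Xp X p" "F (\<lambda>k. a * x k) = \<bar>a\<bar> * F x" using Xp_scale F_scale by auto
next
  fix x assume x: "x \<in> Xp X p"
  show "0 \<le> F x" by (rule F_nonneg[OF x])
  show "F x = 0 \<longleftrightarrow> x = (\<lambda>k. 0)"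
  proof
    assume h: "F x = 0"
    have m: "(\<lambda>j. \<bar>x j\<bar> powr (1/p)) \<in> X" using x unfolding Xp_iff by blast
    have "(N (\<lambda>j. \<bar>x j\<bar> powr (1/p)) / c) powr p \<le> 0" using F_lower[OF x] h by simp
    then have "N (\<lambda>j. \<bar>x j\<bar> powr (1/p)) / c = 0" using powr_ge_zero[of _ p] by (simp add: antisym)
    then have "N (\<lambda>j. \<bar>x j\<bar> powr (1/p)) = 0" using c0 by simp
    then have "(\<lambda>j. \<bar>x j\<bar> powr (1/p)) = (\<lambda>k. 0)" using zero_iff[OF m] by blast
    then show "x = (\<lambda>k. 0)" by (auto simp: fun_eq_iff dest: fun_cong)
  next
    assume "x = (\<lambda>k. 0)" then show "F x = 0" using F_zero by simp
  qed
qed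

lemma F_bounds:
  assumes s: "\<sigma> \<in> X"
  shows "(1 / c) * N \<sigma> \<le> F (\<lambda>k. \<bar>\<sigma> k\<bar> powr p) powr (1 / p)"
        "F (\<lambda>k. \<bar>\<sigma> k\<bar> powr p) powr (1 / p) \<le> N \<sigma>"
proof -
  have u: "(\<lambda>k. \<bar>\<sigma> k\<bar> powr p) \<in> Xp X p" by (rule Xp_pow[OF s])
  have e: "(\<lambda>j. \<bar>\<bar>\<sigma> j\<bar> powr p\<bar> powr (1/p)) = (\<lambda>j. \<bar>\<sigma> j\<bar>)" using p0 by (auto simp: powr_powr)
  have Fn: "0 \<le> F (\<lambda>k. \<bar>\<sigma> k\<bar> powr p)" by (rule F_nonneg[OF u])
  have "F (\<lambda>k. \<bar>\<sigma> k\<bar> powr p) \<le> N \<sigma> powr p" using F_upper[OF u] unfolding e abs_norm[OF s] .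
  then show "F (\<lambda>k. \<bar>\<sigma> k\<bar> powr p) powr (1 / p) \<le> N \<sigma>"
    using powr_inv_le_iff[OF p0 Fn nonneg[OF s]] by simp
  have "(N \<sigma> / c) powr p \<le> F (\<lambda>k. \<bar>\<sigma> k\<bar> powr p)" using F_lower[OF u] unfolding e abs_norm[OF s] .
  then have "N \<sigma> / c \<le> F (\<lambda>k. \<bar>\<sigma> k\<bar> powr p) powr (1 / p)"
    using powr_inv_ge_iff[OF p0 Fn, of "N \<sigma> / c"] nonneg[OF s] c0 by simp
  then show "(1 / c) * N \<sigma> \<le> F (\<lambda>k. \<bar>\<sigma> k\<bar> powr p) powr (1 / p)" by simp
qed

end



context pconv
begin

interpretation DYP: pre_ms_p DY ND p by (rule DY_pre_ms_p)

lemma key_finite: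
  assumes r: "\<rho> \<in> X" and z: "\<And>k. k \<ge> n \<Longrightarrow> \<rho> k = 0"
  shows "N \<rho> \<le> c * DYP.ND \<rho>"
proof -
  define q where "q = (\<lambda>u. F (trunc n u))"
  have qs: "sublin q" unfolding sublin_def q_def
  proof (intro conjI allI impI)
    fix u v
    show "F (trunc n (\<lambda>k. u k + v k)) \<le> F (trunc n u) + F (trunc n v)"
      unfolding trunc_add by (rule F_add[OF Xp_trunc Xp_trunc])
  next
    fix t :: real and u assume "0 \<le> t"
    then show "F (trunc n (\<lambda>k. t * u k)) = t * F (trunc n u)"
      unfolding trunc_scale using F_scale[OF Xp_trunc, of t n u] by simp
  qed
  have qd: "\<And>u. q u = q (trunc n u)" unfolding q_def trunc_trunc ..
  define u0 where "u0 = (\<lambda>k. \<bar>\<rho> k\<bar> powr p)"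
  obtain w where w1: "\<And>u. (\<Sum>k<n. w k * u k) \<le> q u" and w2: "(\<Sum>k<n. w k * u0 k) = q u0"
    using hb_point[OF qs qd, of u0] by blast
  define \<tau> where "\<tau> = trunc n (\<lambda>k. \<bar>w k\<bar> powr (1/p))"
  have tpow: "\<bar>\<tau> k * y\<bar> powr p = \<bar>w k\<bar> * \<bar>y\<bar> powr p" if "k < n" for k y
    using that p0 by (simp add: \<tau>_def trunc_def abs_mult powr_mult powr_powr)
  have zt: "\<And>k. k \<ge> n \<Longrightarrow> \<tau> k * y k = 0" for y by (simp add: \<tau>_def trunc_def)
  have h: "(\<lambda>k. \<tau> k * x k) \<in> ellp p \<and> ellp_norm p (\<lambda>k. \<tau> k * x k) \<le> 1 * N x" if x: "x \<in> X" for x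
  proof -
    have m: "(\<lambda>k. \<tau> k * x k) \<in> ellp p" by (rule ellp_finsupp(1)[OF zt p0])
    define v where "v = (\<lambda>k. (if w k \<ge> 0 then 1 else -1) * \<bar>x k\<bar> powr p)"
    have "(\<Sum>k. \<bar>\<tau> k * x k\<bar> powr p) = (\<Sum>k<n. \<bar>\<tau> k * x k\<bar> powr p)" by (rule ellp_finsupp(2)[OF zt p0])
    also have "\<dots> = (\<Sum>k<n. w k * v k)"
      by (rule sum.cong) (auto simp: tpow v_def)
    also have "\<dots> \<le> q v" by (rule w1)
    also have "\<dots> \<le> F (\<lambda>k. \<bar>x k\<bar> powr p)" unfolding q_def
      by (rule F_mono[OF Xp_pow[OF x]]) (auto simp: trunc_def v_def)
    also have "\<dots> \<le> N x powr p"
    proof -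
      have e: "(\<lambda>j. \<bar>\<bar>x j\<bar> powr p\<bar> powr (1/p)) = (\<lambda>j. \<bar>x j\<bar>)" using p0 by (auto simp: powr_powr)
      show ?thesis using F_upper[OF Xp_pow[OF x]] unfolding e abs_norm[OF x] .
    qed
    finally have "ellp_norm p (\<lambda>k. \<tau> k * x k) \<le> N x" using ellp_norm_le_iff[OF m p0 nonneg[OF x]] by simp
    then show ?thesis using m by simp
  qed
  have tY: "\<tau> \<in> DY" and tN: "ND \<tau> \<le> 1" using DY_intro[OF h] by auto
  have rB: "\<rho> \<in> DYP.DY" by (rule X_sub_bidual(1)[OF r])
  have le1: "ellp_norm p (\<lambda>k. \<rho> k * \<tau> k) \<le> DYP.ND \<rho>" by (rule DYP.ND_upper[OF rB tY tN])
  have mr: "(\<lambda>k. \<rho> k * \<tau> k) \<in> ellp p" by (rule DYP.DY_D[OF rB tY])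
  have zt2: "\<And>k. k \<ge> n \<Longrightarrow> \<rho> k * \<tau> k = 0" using zt[of _ \<rho>] by (simp add: mult.commute)
  have u0t: "trunc n u0 = u0" using z p0 by (auto simp: trunc_def u0_def fun_eq_iff)
  have u0X: "u0 \<in> Xp X p" unfolding u0_def by (rule Xp_pow[OF r])
  have e0: "(\<lambda>j. \<bar>u0 j\<bar> powr (1/p)) = (\<lambda>j. \<bar>\<rho> j\<bar>)" using p0 by (auto simp: u0_def powr_powr)
  have "(N \<rho> / c) powr p \<le> F u0" using F_lower[OF u0X] unfolding e0 abs_norm[OF r] .
  also have "F u0 = q u0" unfolding q_def u0t ..
  also have "\<dots> = (\<Sum>k<n. w k * u0 k)" using w2 by simp
  also have "\<dots> \<le> (\<Sum>k<n. \<bar>\<rho> k * \<tau> k\<bar> powr p)"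
  proof (rule sum_mono)
    fix k assume "k \<in> {..<n}"
    then have "\<bar>\<rho> k * \<tau> k\<bar> powr p = \<bar>w k\<bar> * u0 k" using tpow[of k "\<rho> k"] by (simp add: mult.commute u0_def)
    moreover have "w k * u0 k \<le> \<bar>w k\<bar> * u0 k" by (intro mult_right_mono) (auto simp: u0_def)
    ultimately show "w k * u0 k \<le> \<bar>\<rho> k * \<tau> k\<bar> powr p" by simp
  qed
  also have "\<dots> = (\<Sum>k. \<bar>\<rho> k * \<tau> k\<bar> powr p)" using ellp_finsupp(2)[OF zt2 p0] by simp
  finally have "N \<rho> / c \<le> ellp_norm p (\<lambda>k. \<rho> k * \<tau> k)"
    using ellp_norm_ge_iff[OF mr p0, of "N \<rho> / c"] nonneg[OF r] c0 by simp
  then have "N \<rho> / c \<le> DYP.ND \<rho>" using le1 by simp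
  then show ?thesis using c0 by (simp add: field_simps mult.commute)
qed

lemma bidual_eq:
  assumes Fa: "fatou_prop X N"
  shows "X = DYP.DY" "\<And>\<sigma>. \<sigma> \<in> X \<Longrightarrow> N \<sigma> \<le> c * DYP.ND \<sigma>"
proof -
  interpret DYY: pre_ms DYP.DY DYP.ND by (rule DYP.DY_pre_ms)
  have main: "\<sigma> \<in> X \<and> N \<sigma> \<le> c * DYP.ND \<sigma>" if s: "\<sigma> \<in> DYP.DY" for \<sigma>
  proof -
    have "N (trunc n \<sigma>) \<le> c * DYP.ND \<sigma>" for n
    proof -
      have tX: "trunc n \<sigma> \<in> X" using trunc_mem_norm by blast
      have "N (trunc n \<sigma>) \<le> c * DYP.ND (trunc n \<sigma>)" by (rule key_finite[OF tX, of n]) (simp add: trunc_def)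
      also have "\<dots> \<le> c * DYP.ND \<sigma>" using DYY.trunc_mono[OF s, of n] c0 by simp
      finally show ?thesis .
    qed
    then show ?thesis using fatou_le[OF Fa] by blast
  qed
  show "X = DYP.DY" using main X_sub_bidual(1) by blast
  fix \<sigma> assume "\<sigma> \<in> X"
  then show "N \<sigma> \<le> c * DYP.ND \<sigma>" using main X_sub_bidual(1) by blast
qed

end

lemma normed_sum:
  assumes S: "normed_seq_space S Nn" and u: "\<And>k. k < (n::nat) \<Longrightarrow> u k \<in> S"
  shows "(\<lambda>j. \<Sum>k<n. u k j) \<in> S \<and> Nn (\<lambda>j. \<Sum>k<n. u k j) \<le> (\<Sum>k<n. Nn (u k))"
  using u
proof (induction n)
  case 0
  have "(\<lambda>k. 0) \<in> S" "Nn (\<lambda>k. 0) = 0" using S unfolding normed_seq_space_def by blast+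
  then show ?case by simp
next
  case (Suc n)
  then have IH: "(\<lambda>j. \<Sum>k<n. u k j) \<in> S" "Nn (\<lambda>j. \<Sum>k<n. u k j) \<le> (\<Sum>k<n. Nn (u k))" by auto
  have un: "u n \<in> S" using Suc by auto
  have A: "\<forall>x\<in>S. \<forall>y\<in>S. (\<lambda>k. x k + y k) \<in> S" and B: "\<forall>x\<in>S. \<forall>y\<in>S. Nn (\<lambda>k. x k + y k) \<le> Nn x + Nn y"
    using S unfolding normed_seq_space_def by blast+
  have "(\<lambda>j. (\<Sum>k<n. u k j) + u n j) \<in> S" using bspec[OF bspec[OF A IH(1)] un] by simp
  moreover have "Nn (\<lambda>j. (\<Sum>k<n. u k j) + u n j) \<le> Nn (\<lambda>j. \<Sum>k<n. u k j) + Nn (u n)"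
    using bspec[OF bspec[OF B IH(1)] un] by simp
  ultimately have "(\<lambda>j. (\<Sum>k<n. u k j) + u n j) \<in> S" "Nn (\<lambda>j. (\<Sum>k<n. u k j) + u n j) \<le> Nn (\<lambda>j. \<Sum>k<n. u k j) + Nn (u n)" by blast+
  then show ?case using IH(2) by simp
qed

context pre_ms_p
begin

lemma conv_from_norm:
  assumes Np: "normed_seq_space (Xp X p) Np" and c: "c > 0"
    and bd: "\<forall>\<sigma>\<in>X. (1 / c) * N \<sigma> \<le> Np (\<lambda>k. \<bar>\<sigma> k\<bar> powr p) powr (1 / p) \<and>
                    Np (\<lambda>k. \<bar>\<sigma> k\<bar> powr p) powr (1 / p) \<le> N \<sigma>"
  shows "pconv_ineq X N p c"
  unfolding pconv_ineq_def
proof (intro allI impI)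
  fix n and x :: "nat \<Rightarrow> seq" assume xX: "\<forall>k<n. x k \<in> X"
  define u where "u = (\<lambda>k j. \<bar>x k j\<bar> powr p)"
  have uX: "u k \<in> Xp X p" if "k < n" for k unfolding u_def using Xp_pow xX that by blast
  define \<tau> where "\<tau> = (\<lambda>j. \<Sum>k<n. u k j)"
  have tX: "\<tau> \<in> Xp X p" and tN: "Np \<tau> \<le> (\<Sum>k<n. Np (u k))"
    using normed_sum[OF Np uX] unfolding \<tau>_def by auto
  have t0: "0 \<le> \<tau> j" for j unfolding \<tau>_def u_def by (intro sum_nonneg) auto
  define y where "y = (\<lambda>j. (\<Sum>k<n. \<bar>x k j\<bar> powr p) powr (1 / p))"
  have ye: "y = (\<lambda>j. \<bar>\<tau> j\<bar> powr (1/p))" unfolding y_def using t0 by (auto simp: \<tau>_def u_def)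
  have yX: "y \<in> X" unfolding ye using tX unfolding Xp_iff by blast
  have ype: "(\<lambda>k. \<bar>y k\<bar> powr p) = \<tau>" unfolding ye using t0 p0 by (auto simp: powr_powr)
  have Npn: "0 \<le> Np v" if "v \<in> Xp X p" for v using Np that unfolding normed_seq_space_def by blast
  have uk: "Np (u k) \<le> N (x k) powr p" if "k < n" for k
  proof -
    have e: "u k = (\<lambda>j. \<bar>x k j\<bar> powr p)" unfolding u_def ..
    have "Np (u k) powr (1/p) \<le> N (x k)" unfolding e using bd xX that by blast
    then show ?thesis using powr_inv_le_iff[OF p0 Npn[OF uX[OF that]] nonneg] xX that by blast
  qed
  have "(1 / c) * N y \<le> Np (\<lambda>k. \<bar>y k\<bar> powr p) powr (1 / p)" using bd yX by blast
  also have "\<dots> = Np \<tau> powr (1 / p)" by (simp only: ype)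
  also have "\<dots> \<le> (\<Sum>k<n. N (x k) powr p) powr (1 / p)"
  proof (rule powr_mono2)
    show "0 \<le> 1 / p" using p0 by simp
    show "0 \<le> Np \<tau>" by (rule Npn[OF tX])
    show "Np \<tau> \<le> (\<Sum>k<n. N (x k) powr p)" using tN sum_mono[of "{..<n}" "\<lambda>k. Np (u k)"] uk
      by (smt (verit, best) lessThan_iff sum_mono)
  qed
  finally have "N y \<le> c * (\<Sum>k<n. N (x k) powr p) powr (1 / p)" using c by (simp add: field_simps mult.commute)
  then show "(\<lambda>j. (\<Sum>k<n. \<bar>x k j\<bar> powr p) powr (1 / p)) \<in> X \<and>
        N (\<lambda>j. (\<Sum>k<n. \<bar>x k j\<bar> powr p) powr (1 / p)) \<le> c * (\<Sum>k<n. N (x k) powr p) powr (1 / p)"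
    using yX unfolding y_def by simp
qed

lemma conv_from_diag:
  assumes a: "0 < a" and b: "0 < b"
    and bd: "\<forall>\<sigma>\<in>DY. a * N' \<sigma> \<le> ND \<sigma> \<and> ND \<sigma> \<le> b * N' \<sigma>"
  shows "pconv_ineq DY N' p (b / a)"
  unfolding pconv_ineq_def
proof (intro allI impI)
  fix n and x :: "nat \<Rightarrow> seq" assume xX: "\<forall>k<n. x k \<in> DY"
  define y where "y = (\<lambda>j. (\<Sum>k<n. \<bar>x k j\<bar> powr p) powr (1 / p))"
  define D where "D = (\<Sum>k<n. ND (x k) powr p) powr (1 / p)"
  have D0: "0 \<le> D" unfolding D_def by simp
  have h: "(\<lambda>j. y j * \<tau> j) \<in> ellp p \<and> ellp_norm p (\<lambda>j. y j * \<tau> j) \<le> D * N \<tau>" if t: "\<tau> \<in> X" for \<tau>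
  proof -
    have sk: "summable (\<lambda>j. \<bar>x k j * \<tau> j\<bar> powr p)" if "k < n" for k
      using DY_D[of "x k" \<tau>] xX that t unfolding ellp_def by blast
    have pe: "\<bar>y j * \<tau> j\<bar> powr p = (\<Sum>k<n. \<bar>x k j * \<tau> j\<bar> powr p)" for j
    proof -
      have "\<bar>y j * \<tau> j\<bar> powr p = (y j) powr p * \<bar>\<tau> j\<bar> powr p" unfolding y_def by (simp add: abs_mult powr_mult)
      also have "(y j) powr p = (\<Sum>k<n. \<bar>x k j\<bar> powr p)" unfolding y_def using p0
        by (simp add: powr_powr sum_nonneg)
      finally show ?thesis by (simp add: sum_distrib_right abs_mult powr_mult)
    qed
    have sy: "summable (\<lambda>j. \<bar>y j * \<tau> j\<bar> powr p)" unfolding pe by (rule summable_sum) (use sk in auto)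
    then have my: "(\<lambda>j. y j * \<tau> j) \<in> ellp p" by (simp add: ellp_def)
    have "(\<Sum>j. \<bar>y j * \<tau> j\<bar> powr p) = (\<Sum>k<n. (\<Sum>j. \<bar>x k j * \<tau> j\<bar> powr p))"
      unfolding pe by (rule suminf_sum) (use sk in auto)
    also have "\<dots> \<le> (\<Sum>k<n. ND (x k) powr p * N \<tau> powr p)"
    proof (rule sum_mono)
      fix k assume k: "k \<in> {..<n}"
      have xk: "x k \<in> DY" using xX k by auto
      have "ellp_norm p (\<lambda>j. x k j * \<tau> j) \<le> ND (x k) * N \<tau>" by (rule ND_bound[OF xk t])
      then have "(\<Sum>j. \<bar>x k j * \<tau> j\<bar> powr p) \<le> (ND (x k) * N \<tau>) powr p"
        using ellp_norm_le_iff[OF DY_D[OF xk t] p0] ND_nonneg[OF xk] nonneg[OF t] by simp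
      then show "(\<Sum>j. \<bar>x k j * \<tau> j\<bar> powr p) \<le> ND (x k) powr p * N \<tau> powr p"
        using ND_nonneg[OF xk] nonneg[OF t] by (simp add: powr_mult)
    qed
    also have "\<dots> = (D * N \<tau>) powr p" unfolding D_def using p0 nonneg[OF t]
      by (simp add: powr_mult powr_powr sum_distrib_right sum_nonneg)
    finally have "ellp_norm p (\<lambda>j. y j * \<tau> j) \<le> D * N \<tau>"
      using ellp_norm_le_iff[OF my p0] D0 nonneg[OF t] by simp
    then show ?thesis using my by simp
  qed
  have yD: "y \<in> DY" and NDy: "ND y \<le> D" using DY_intro[OF h D0] by auto
  have "a * N' y \<le> D" using bd yD NDy by force
  also have "D \<le> (\<Sum>k<n. (b * N' (x k)) powr p) powr (1 / p)" unfolding D_def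
  proof (rule powr_mono2)
    show "0 \<le> 1 / p" using p0 by simp
    show "0 \<le> (\<Sum>k<n. ND (x k) powr p)" by (simp add: sum_nonneg)
    show "(\<Sum>k<n. ND (x k) powr p) \<le> (\<Sum>k<n. (b * N' (x k)) powr p)"
    proof (rule sum_mono)
      fix k assume "k \<in> {..<n}"
      then have xk: "x k \<in> DY" using xX by auto
      then show "ND (x k) powr p \<le> (b * N' (x k)) powr p"
        using bd ND_nonneg[OF xk] p0 by (intro powr_mono2) auto
    qed
  qed
  also have "\<dots> = b * (\<Sum>k<n. N' (x k) powr p) powr (1 / p)"
  proof -
    have nn: "0 \<le> N' (x k)" if "k < n" for k
    proof -
      have "0 \<le> ND (x k)" using ND_nonneg xX that by blast
      also have "\<dots> \<le> b * N' (x k)" using bd xX that by blast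
      finally show ?thesis using b by (simp add: zero_le_mult_iff)
    qed
    have "(\<Sum>k<n. (b * N' (x k)) powr p) = b powr p * (\<Sum>k<n. N' (x k) powr p)"
      unfolding sum_distrib_left using nn b by (intro sum.cong) (auto simp: powr_mult)
    then show ?thesis using b p0 nn by (simp add: powr_mult powr_powr sum_nonneg)
  qed
  finally have "N' y \<le> (b / a) * (\<Sum>k<n. N' (x k) powr p) powr (1 / p)" using a by (simp add: field_simps mult.commute)
  then show "(\<lambda>j. (\<Sum>k<n. \<bar>x k j\<bar> powr p) powr (1 / p)) \<in> DY \<and>
       N' (\<lambda>j. (\<Sum>k<n. \<bar>x k j\<bar> powr p) powr (1 / p)) \<le> b / a * (\<Sum>k<n. N' (x k) powr p) powr (1 / p)"
    using yD unfolding y_def by simp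
qed

end



lemma max_pre_ms_p:
  assumes m: "maximal_seq_space X N" and p: "1 \<le> p"
  shows "pre_ms_p X N p"
proof -
  have b: "banach_seq_space X N" "ell1 \<subseteq> X" "\<forall>k. N (unitvec k) = 1" "ideal_prop X N"
    using m unfolding maximal_iff by blast+
  show ?thesis
  proof (intro pre_ms_p.intro pre_ms.intro pre_ms_p_axioms.intro p)
    show "normed_seq_space X N" using b(1) unfolding banach_seq_space_def by blast
    show "ideal_prop X N" by (rule b(4))
    show "unitvec k \<in> X" for k using b(2) unitvec_ell1 by blast
    show "N (unitvec k) = 1" for k using b(3) by blast
  qed
qed

lemma max_fatou: "maximal_seq_space X N \<Longrightarrow> fatou_prop X N"
  unfolding maximal_iff by blast

lemma max_pconv: "maximal_seq_space X N \<Longrightarrow> 1 \<le> p \<Longrightarrow> 0 < c \<Longrightarrow> pconv_ineq X N p c \<Longrightarrow> pconv X N p c"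
  by (intro pconv.intro max_pre_ms_p pconv_axioms.intro)

lemma st_A1:
  assumes "maximal_seq_space X N" "1 \<le> p" "0 < c" "pconv_ineq X N p c"
  shows "\<exists>Np c. normed_seq_space (Xp X p) Np \<and> c > 0 \<and>
               (\<forall>\<sigma>\<in>X. (1 / c) * N \<sigma> \<le> Np (\<lambda>k. \<bar>\<sigma> k\<bar> powr p) powr (1 / p) \<and>
                        Np (\<lambda>k. \<bar>\<sigma> k\<bar> powr p) powr (1 / p) \<le> N \<sigma>)"
proof -
  interpret PC: pconv X N p c by (rule max_pconv[OF assms])
  show ?thesis using PC.F_normed PC.F_bounds assms(3) by blast
qed

lemma st_A2:
  assumes "maximal_seq_space X N" "1 \<le> p" "normed_seq_space (Xp X p) Np" "c > 0"
    "\<forall>\<sigma>\<in>X. (1 / c) * N \<sigma> \<le> Np (\<lambda>k. \<bar>\<sigma> k\<bar> powr p) powr (1 / p) \<and>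
                        Np (\<lambda>k. \<bar>\<sigma> k\<bar> powr p) powr (1 / p) \<le> N \<sigma>"
  shows "pconv_ineq X N p c"
proof -
  interpret PM: pre_ms_p X N p by (rule max_pre_ms_p[OF assms(1,2)])
  show ?thesis by (rule PM.conv_from_norm[OF assms(3,4,5)])
qed

lemma st_C:
  assumes m: "maximal_seq_space X N" and p: "1 \<le> p" and c: "0 < c" "pconv_ineq X N p c"
  shows "maximal_seq_space (diag_ops X N (ellp p) (ellp_norm p)) (diag_norm X N (ellp_norm p))"
    "X = diag_ops (diag_ops X N (ellp p) (ellp_norm p)) (diag_norm X N (ellp_norm p)) (ellp p) (ellp_norm p)"
    "\<And>\<sigma>. \<sigma> \<in> X \<Longrightarrow> N \<sigma> \<le> c * diag_norm (diag_ops X N (ellp p) (ellp_norm p)) (diag_norm X N (ellp_norm p)) (ellp_norm p) \<sigma>"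
    "\<And>\<sigma>. \<sigma> \<in> X \<Longrightarrow> diag_norm (diag_ops X N (ellp p) (ellp_norm p)) (diag_norm X N (ellp_norm p)) (ellp_norm p) \<sigma> \<le> N \<sigma>"
proof -
  interpret PC: pconv X N p c by (rule max_pconv[OF m p c])
  show "maximal_seq_space (diag_ops X N (ellp p) (ellp_norm p)) (diag_norm X N (ellp_norm p))"
    by (rule PC.DY_maximal)
  show "X = diag_ops (diag_ops X N (ellp p) (ellp_norm p)) (diag_norm X N (ellp_norm p)) (ellp p) (ellp_norm p)"
    by (rule PC.bidual_eq(1)[OF max_fatou[OF m]])
  fix \<sigma> assume s: "\<sigma> \<in> X"
  show "N \<sigma> \<le> c * diag_norm (diag_ops X N (ellp p) (ellp_norm p)) (diag_norm X N (ellp_norm p)) (ellp_norm p) \<sigma>"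
    by (rule PC.bidual_eq(2)[OF max_fatou[OF m] s])
  show "diag_norm (diag_ops X N (ellp p) (ellp_norm p)) (diag_norm X N (ellp_norm p)) (ellp_norm p) \<sigma> \<le> N \<sigma>"
    by (rule PC.X_sub_bidual(2)[OF s])
qed

lemma st_B2:
  assumes m: "maximal_seq_space Y NY" and p: "1 \<le> p" and a: "0 < a" and b: "0 < b"
    and bd: "\<forall>\<sigma>\<in>diag_ops Y NY (ellp p) (ellp_norm p). a * N \<sigma> \<le> diag_norm Y NY (ellp_norm p) \<sigma> \<and>
                           diag_norm Y NY (ellp_norm p) \<sigma> \<le> b * N \<sigma>"
  shows "pconv_ineq (diag_ops Y NY (ellp p) (ellp_norm p)) N p (b / a)"
proof -
  interpret PM: pre_ms_p Y NY p by (rule max_pre_ms_p[OF m p])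
  show ?thesis by (rule PM.conv_from_diag[OF a b bd])
qed

theorem proposition1p1:
  fixes X :: "seq set" and N :: "seq \<Rightarrow> real" and p :: real
  assumes "1 \<le> p" and "maximal_seq_space X N"
  shows "(p_convex X N p \<longleftrightarrow>
            (\<exists>Np c. normed_seq_space (Xp X p) Np \<and> c > 0 \<and>
               (\<forall>\<sigma>\<in>X. (1 / c) * N \<sigma> \<le> Np (\<lambda>k. \<bar>\<sigma> k\<bar> powr p) powr (1 / p) \<and>
                        Np (\<lambda>k. \<bar>\<sigma> k\<bar> powr p) powr (1 / p) \<le> N \<sigma>)))
       \<and> (p_convex X N p \<longleftrightarrow>
            (\<exists>Y NY. maximal_seq_space Y NY \<and> X = diag_ops Y NY (ellp p) (ellp_norm p) \<and>
               (\<exists>a b. a > 0 \<and> b > 0 \<and>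
                  (\<forall>\<sigma>\<in>X. a * N \<sigma> \<le> diag_norm Y NY (ellp_norm p) \<sigma> \<and>
                           diag_norm Y NY (ellp_norm p) \<sigma> \<le> b * N \<sigma>))))
       \<and> (p_convex X N p \<longrightarrow>
            (let Y = diag_ops X N (ellp p) (ellp_norm p);
                 NY = diag_norm X N (ellp_norm p)
             in maximal_seq_space Y NY \<and> X = diag_ops Y NY (ellp p) (ellp_norm p) \<and>
                (\<forall>\<sigma>\<in>X. N \<sigma> / pconv_const X N p \<le> diag_norm Y NY (ellp_norm p) \<sigma> \<and>
                         diag_norm Y NY (ellp_norm p) \<sigma> \<le> N \<sigma>)))"
proof -
  note p = assms(1) and m = assms(2)
  define Y0 where "Y0 = diag_ops X N (ellp p) (ellp_norm p)"
  define NY0 where "NY0 = diag_norm X N (ellp_norm p)"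
  have A: "p_convex X N p \<longleftrightarrow>
            (\<exists>Np c. normed_seq_space (Xp X p) Np \<and> c > 0 \<and>
               (\<forall>\<sigma>\<in>X. (1 / c) * N \<sigma> \<le> Np (\<lambda>k. \<bar>\<sigma> k\<bar> powr p) powr (1 / p) \<and>
                        Np (\<lambda>k. \<bar>\<sigma> k\<bar> powr p) powr (1 / p) \<le> N \<sigma>))"
  proof
    assume "p_convex X N p"
    then obtain c where "0 < c" "pconv_ineq X N p c" unfolding p_convex_def by blast
    then show "\<exists>Np c. normed_seq_space (Xp X p) Np \<and> c > 0 \<and>
               (\<forall>\<sigma>\<in>X. (1 / c) * N \<sigma> \<le> Np (\<lambda>k. \<bar>\<sigma> k\<bar> powr p) powr (1 / p) \<and>
                        Np (\<lambda>k. \<bar>\<sigma> k\<bar> powr p) powr (1 / p) \<le> N \<sigma>)"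
      by (rule st_A1[OF m p])
  next
    assume "\<exists>Np c. normed_seq_space (Xp X p) Np \<and> c > 0 \<and>
               (\<forall>\<sigma>\<in>X. (1 / c) * N \<sigma> \<le> Np (\<lambda>k. \<bar>\<sigma> k\<bar> powr p) powr (1 / p) \<and>
                        Np (\<lambda>k. \<bar>\<sigma> k\<bar> powr p) powr (1 / p) \<le> N \<sigma>)"
    then obtain Np c where h: "normed_seq_space (Xp X p) Np" "c > 0"
      "\<forall>\<sigma>\<in>X. (1 / c) * N \<sigma> \<le> Np (\<lambda>k. \<bar>\<sigma> k\<bar> powr p) powr (1 / p) \<and>
                        Np (\<lambda>k. \<bar>\<sigma> k\<bar> powr p) powr (1 / p) \<le> N \<sigma>" by blast
    show "p_convex X N p" unfolding p_convex_def using st_A2[OF m p h] h(2) by blast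
  qed
  have B: "p_convex X N p \<longleftrightarrow>
            (\<exists>Y NY. maximal_seq_space Y NY \<and> X = diag_ops Y NY (ellp p) (ellp_norm p) \<and>
               (\<exists>a b. a > 0 \<and> b > 0 \<and>
                  (\<forall>\<sigma>\<in>X. a * N \<sigma> \<le> diag_norm Y NY (ellp_norm p) \<sigma> \<and>
                           diag_norm Y NY (ellp_norm p) \<sigma> \<le> b * N \<sigma>)))"
  proof
    assume "p_convex X N p"
    then obtain c where c: "0 < c" "pconv_ineq X N p c" unfolding p_convex_def by blast
    note C = st_C[OF m p c]
    have "\<forall>\<sigma>\<in>X. (1 / c) * N \<sigma> \<le> diag_norm Y0 NY0 (ellp_norm p) \<sigma> \<and>
                           diag_norm Y0 NY0 (ellp_norm p) \<sigma> \<le> 1 * N \<sigma>"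
    proof
      fix \<sigma> assume s: "\<sigma> \<in> X"
      have "N \<sigma> \<le> c * diag_norm Y0 NY0 (ellp_norm p) \<sigma>" using C(3)[OF s] unfolding Y0_def NY0_def .
      then have "(1 / c) * N \<sigma> \<le> diag_norm Y0 NY0 (ellp_norm p) \<sigma>" using c(1) by (simp add: field_simps mult.commute)
      then show "(1 / c) * N \<sigma> \<le> diag_norm Y0 NY0 (ellp_norm p) \<sigma> \<and> diag_norm Y0 NY0 (ellp_norm p) \<sigma> \<le> 1 * N \<sigma>"
        using C(4)[OF s] unfolding Y0_def NY0_def by simp
    qed
    moreover have "maximal_seq_space Y0 NY0" "X = diag_ops Y0 NY0 (ellp p) (ellp_norm p)"
      using C(1,2) unfolding Y0_def NY0_def by auto
    ultimately show "\<exists>Y NY. maximal_seq_space Y NY \<and> X = diag_ops Y NY (ellp p) (ellp_norm p) \<and>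
               (\<exists>a b. a > 0 \<and> b > 0 \<and>
                  (\<forall>\<sigma>\<in>X. a * N \<sigma> \<le> diag_norm Y NY (ellp_norm p) \<sigma> \<and>
                           diag_norm Y NY (ellp_norm p) \<sigma> \<le> b * N \<sigma>))"
      using c(1) by (intro exI[of _ Y0] exI[of _ NY0] conjI exI[of _ "1 / c"] exI[of _ 1]) auto
  next
    assume "\<exists>Y NY. maximal_seq_space Y NY \<and> X = diag_ops Y NY (ellp p) (ellp_norm p) \<and>
               (\<exists>a b. a > 0 \<and> b > 0 \<and>
                  (\<forall>\<sigma>\<in>X. a * N \<sigma> \<le> diag_norm Y NY (ellp_norm p) \<sigma> \<and>
                           diag_norm Y NY (ellp_norm p) \<sigma> \<le> b * N \<sigma>))"
    then obtain Y NY a b where h: "maximal_seq_space Y NY" "X = diag_ops Y NY (ellp p) (ellp_norm p)"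
      "a > 0" "b > 0" "\<forall>\<sigma>\<in>X. a * N \<sigma> \<le> diag_norm Y NY (ellp_norm p) \<sigma> \<and>
                           diag_norm Y NY (ellp_norm p) \<sigma> \<le> b * N \<sigma>" by blast
    have "pconv_ineq (diag_ops Y NY (ellp p) (ellp_norm p)) N p (b / a)"
      by (rule st_B2[OF h(1) p h(3) h(4)]) (use h(2,5) in simp)
    then have "pconv_ineq X N p (b / a)" using h(2) by simp
    then show "p_convex X N p" unfolding p_convex_def using h(3,4) by (intro exI[of _ "b / a"]) simp
  qed
  have Cp: "p_convex X N p \<longrightarrow>
            (let Y = diag_ops X N (ellp p) (ellp_norm p);
                 NY = diag_norm X N (ellp_norm p)
             in maximal_seq_space Y NY \<and> X = diag_ops Y NY (ellp p) (ellp_norm p) \<and>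
                (\<forall>\<sigma>\<in>X. N \<sigma> / pconv_const X N p \<le> diag_norm Y NY (ellp_norm p) \<sigma> \<and>
                         diag_norm Y NY (ellp_norm p) \<sigma> \<le> N \<sigma>))"
  proof
    assume pc: "p_convex X N p"
    define Cs where "Cs = {c. c > 0 \<and> pconv_ineq X N p c}"
    define M where "M = pconv_const X N p"
    have MI: "M = Inf Cs" unfolding M_def Cs_def pconv_const_def ..
    have Cne: "Cs \<noteq> {}" using pc unfolding p_convex_def Cs_def by blast
    have Cbd: "bdd_below Cs" unfolding Cs_def by (rule bdd_belowI[of _ 0]) auto
    have M0: "0 \<le> M" unfolding MI by (rule cInf_greatest[OF Cne]) (auto simp: Cs_def)
    obtain c where c: "0 < c" "pconv_ineq X N p c" using pc unfolding p_convex_def by blast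
    note C = st_C[OF m p c]
    have "\<forall>\<sigma>\<in>X. N \<sigma> / M \<le> diag_norm Y0 NY0 (ellp_norm p) \<sigma> \<and> diag_norm Y0 NY0 (ellp_norm p) \<sigma> \<le> N \<sigma>"
    proof
      fix \<sigma> assume s: "\<sigma> \<in> X"
      define D where "D = diag_norm Y0 NY0 (ellp_norm p) \<sigma>"
      have allc: "N \<sigma> \<le> c' * D" if "c' \<in> Cs" for c'
        using st_C(3)[OF m p _ _ s, of c'] that unfolding Cs_def D_def Y0_def NY0_def by blast
      have Nn: "0 \<le> N \<sigma>"
      proof -
        interpret PM: pre_ms_p X N p by (rule max_pre_ms_p[OF m p])
        show ?thesis by (rule PM.nonneg[OF s])
      qed
      have cD: "0 \<le> c * D" using allc[of c] c Nn by (auto simp: Cs_def)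
      then have D0: "0 \<le> D" using c(1) by (simp add: zero_le_mult_iff)
      have "N \<sigma> / M \<le> D"
      proof (cases "D = 0")
        case True
        then have "N \<sigma> = 0" using allc[of c] c Nn by (auto simp: Cs_def)
        then show ?thesis using True by simp
      next
        case False
        then have Dp: "0 < D" using D0 by simp
        have "N \<sigma> / D \<le> M" unfolding MI
          by (rule cInf_greatest[OF Cne]) (use allc Dp in \<open>auto simp: field_simps\<close>)
        then have le: "N \<sigma> \<le> M * D" using Dp by (simp add: field_simps)
        show ?thesis
        proof (cases "M = 0")
          case True then show ?thesis using D0 by simp
        next
          case False then have "0 < M" using M0 by simp
          then show ?thesis using le by (simp add: field_simps mult.commute)
        qed
      qed
      then show "N \<sigma> / M \<le> diag_norm Y0 NY0 (ellp_norm p) \<sigma> \<and> diag_norm Y0 NY0 (ellp_norm p) \<sigma> \<le> N \<sigma>"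
        using C(4)[OF s] unfolding D_def Y0_def NY0_def by simp
    qed
    then show "let Y = diag_ops X N (ellp p) (ellp_norm p);
                 NY = diag_norm X N (ellp_norm p)
             in maximal_seq_space Y NY \<and> X = diag_ops Y NY (ellp p) (ellp_norm p) \<and>
                (\<forall>\<sigma>\<in>X. N \<sigma> / pconv_const X N p \<le> diag_norm Y NY (ellp_norm p) \<sigma> \<and>
                         diag_norm Y NY (ellp_norm p) \<sigma> \<le> N \<sigma>)"
      using C(1,2) unfolding Let_def Y0_def NY0_def M_def by blast
  qed
  show ?thesis using A B Cp by blast
qed

end
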